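(* Let $0=x_1<\dots<x_N=1$ be a partition of $I=[0,1]$, let $\{q_n\}$ be a sequence in $(0,1]$ with $\lim q_n=1$, and let $\alpha_i$, $i\in\mathbb{N}_{N-1}$, be bounded functions on $I$ with $\|\alpha_i\|_\infty<1$. Let $\{\lambda_i\}_{i\ge1}$ be a sequence of distinct positive real numbers with $\inf_{i\ge1}\lambda_i>0$ and $\sum_{i=1}^\infty\frac1{\lambda_i}=\infty$. Then the set \[ S=\bigcup_{n=1}^\infty\bigcup_{m=1}^\infty\operatorname{span}\{1,(x^{\lambda_1})^{(q_n,\alpha)}_n,\dots,(x^{\lambda_m})^{(q_n,\alpha)}_n\} \] is dense in $C[0,1]$ with respect to the sup-norm.
   Context: For $q\in(0,1]$: $[k]_q=\frac{1-q^k}{1-q}$ ($q\ne1$), $[k]_1=k$, $q$-factorials, $\binom{n}{k}_q=\frac{[n]_q!}{[k]_q![n-k]_q!}$. On $[0,1]$ the quantum MKZ operator is $M_{n,q}h(x)=\prod_{j=0}^n(1-q^jx)\sum_{k\ge0}\binom{n+k}{k}_q x^k h\!\left(\frac{[k]_q}{[k+n]_q}\right)$ for $0\le x<1$, $M_{n,q}h(1)=h(1)$. Let $u_i(x)=a_ix+b_i$ be the affine maps with $u_i(0)=x_i$, $u_i(1)=x_{i+1}$, $i\in\mathbb{N}_{N-1}$. For $h\in C[0,1]$, $h^{(q,\alpha)}_n$ denotes the unique bounded function $G:[0,1]\to\mathbb{R}$ with $G(u_i(x))=h(u_i(x))+\alpha_i(x)(G(x)-M_{n,q}h(x))$ for all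 $x\in I$, $i\in\mathbb{N}_{N-1}$; $(x^{\lambda})^{(q,\alpha)}_n$ is this function for $h(x)=x^\lambda$. *)

theory Defs
  imports "HOL-Analysis.Analysis"
begin

definition qint :: "real \<Rightarrow> nat \<Rightarrow> real" where
  "qint q k = (if q = 1 then real k else (1 - q ^ k) / (1 - q))"

definition qfact :: "real \<Rightarrow> nat \<Rightarrow> real" where
  "qfact q n = (\<Prod>k=1..n. qint q k)"

definition qbinom :: "real \<Rightarrow> nat \<Rightarrow> nat \<Rightarrow> real" where
  "qbinom q n k = qfact q n / (qfact q k * qfact q (n - k))"

definition MKZ :: "nat \<Rightarrow> real \<Rightarrow> (real \<Rightarrow> real) \<Rightarrow> real \<Rightarrow> real" where
  "MKZ n q h x =
     (if x = 1 then h 1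
      else (\<Prod>j=0..n. 1 - q ^ j * x) *
           (\<Sum>k. qbinom q (n + k) k * x ^ k * h (qint q k / qint q (k + n))))"

definition affu :: "(nat \<Rightarrow> real) \<Rightarrow> nat \<Rightarrow> real \<Rightarrow> real" where
  "affu xs i t = (xs (Suc i) - xs i) * t + xs i"

definition fractal ::
  "nat \<Rightarrow> (nat \<Rightarrow> real) \<Rightarrow> (nat \<Rightarrow> real \<Rightarrow> real) \<Rightarrow> nat \<Rightarrow> real \<Rightarrow> (real \<Rightarrow> real) \<Rightarrow> real \<Rightarrow> real"
  where
  "fractal N xs alpha n q h =
     (THE G. bounded (G ` {0..1}) \<and> (\<forall>t. t \<notin> {0..1} \<longrightarrow> G t = 0) \<and>
        (\<forall>i\<in>{1..N-1}. \<forall>t\<in>{0..1}.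
           G (affu xs i t) = h (affu xs i t) + alpha i t * (G t - MKZ n q h t)))"

end

theory Submission
  imports Defs
begin


definition apx :: "(nat \<Rightarrow> real) \<Rightarrow> (real \<Rightarrow> real) \<Rightarrow> bool" where
  "apx lam g \<longleftrightarrow> (\<forall>\<epsilon>>0. \<exists>m c. \<forall>t\<in>{0..1}.
      \<bar>g t - (c 0 + (\<Sum>j=1..m. c j * t powr lam j))\<bar> < \<epsilon>)"

lemma apx_const: "apx lam (\<lambda>t. a)"
  unfolding apx_def by (intro allI impI exI[of _ 0] exI[of _ "\<lambda>_. a"]) auto

lemma apx_pow: assumes "j \<ge> 1" shows "apx lam (\<lambda>t. t powr lam j)"
  unfolding apx_def
proof (intro allI impI exI[of _ j] exI[of _ "\<lambda>i. if i = j then 1 else 0"])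
  fix \<epsilon> :: real assume "\<epsilon> > 0"
  have "(\<Sum>i=1..j. (if i = j then 1 else 0) * t powr lam i) = t powr lam j" for t
  proof -
    have "(\<Sum>i=1..j. (if i = j then 1 else 0) * t powr lam i) = (\<Sum>i\<in>{1..j}. if i = j then t powr lam i else 0)"
      by (rule sum.cong) auto
    then show ?thesis using assms by simp
  qed
  then show "\<forall>t\<in>{0..1}. \<bar>t powr lam j - ((if (0::nat) = j then 1 else 0) +
     (\<Sum>i = 1..j. (if i = j then 1 else 0) * t powr lam i))\<bar> < \<epsilon>"
    using assms \<open>\<epsilon>>0\<close> by simp
qed

lemma sum_ext_zero:
  fixes c :: "nat \<Rightarrow> real"
  assumes "m \<le> M"
  shows "(\<Sum>j=1..m. c j * f j) = (\<Sum>j=1..M. (if j \<le> m then c j else 0) * f j)"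
proof -
  have "(\<Sum>j=1..M. (if j \<le> m then c j else 0) * f j) = (\<Sum>j\<in>{1..m}. (if j \<le> m then c j else 0) * f j)"
    by (rule sum.mono_neutral_right) (use assms in auto)
  then show ?thesis by simp
qed

lemma abs_lin_le: "\<bar>a * x + b * y\<bar> \<le> \<bar>a\<bar> * \<bar>x\<bar> + \<bar>b\<bar> * \<bar>y::real\<bar>"
  using abs_triangle_ineq[of "a*x" "b*y"] by (simp add: abs_mult)

lemma apx_lin:
  assumes f: "apx lam f" and g: "apx lam g"
  shows "apx lam (\<lambda>t. a * f t + b * g t)"
  unfolding apx_def
proof (intro allI impI)
  fix \<epsilon> :: real assume e: "\<epsilon> > 0"
  define d where "d = \<epsilon> / (2 * (\<bar>a\<bar> + \<bar>b\<bar> + 1))"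
  have d: "d > 0" using e by (simp add: d_def add_pos_nonneg)
  obtain m1 c1 where 1: "\<forall>t\<in>{0..1}. \<bar>f t - (c1 0 + (\<Sum>j=1..m1. c1 j * t powr lam j))\<bar> < d"
    using f d unfolding apx_def by blast
  obtain m2 c2 where 2: "\<forall>t\<in>{0..1}. \<bar>g t - (c2 0 + (\<Sum>j=1..m2. c2 j * t powr lam j))\<bar> < d"
    using g d unfolding apx_def by blast
  define M where "M = max m1 m2"
  define c where "c j = a * (if j \<le> m1 then c1 j else 0) + b * (if j \<le> m2 then c2 j else 0)" for j
  show "\<exists>m c. \<forall>t\<in>{0..1}. \<bar>a * f t + b * g t - (c 0 + (\<Sum>j = 1..m. c j * t powr lam j))\<bar> < \<epsilon>"
  proof (intro exI[of _ M] exI[of _ c] ballI)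
    fix t :: real assume t: "t \<in> {0..1}"
    have s1: "(\<Sum>j=1..m1. c1 j * t powr lam j) = (\<Sum>j=1..M. (if j \<le> m1 then c1 j else 0) * t powr lam j)"
      by (rule sum_ext_zero) (simp add: M_def)
    have s2: "(\<Sum>j=1..m2. c2 j * t powr lam j) = (\<Sum>j=1..M. (if j \<le> m2 then c2 j else 0) * t powr lam j)"
      by (rule sum_ext_zero) (simp add: M_def)
    have sc: "(\<Sum>j=1..M. c j * t powr lam j) = a * (\<Sum>j=1..m1. c1 j * t powr lam j) + b * (\<Sum>j=1..m2. c2 j * t powr lam j)"
      unfolding s1 s2 c_def by (simp add: sum_distrib_left sum.distrib algebra_simps)
    have c0: "c 0 = a * c1 0 + b * c2 0" by (simp add: c_def)
    have "\<bar>a * f t + b * g t - (c 0 + (\<Sum>j = 1..M. c j * t powr lam j))\<bar>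
        = \<bar>a * (f t - (c1 0 + (\<Sum>j=1..m1. c1 j * t powr lam j))) + b * (g t - (c2 0 + (\<Sum>j=1..m2. c2 j * t powr lam j)))\<bar>"
      unfolding sc c0 by (simp add: algebra_simps)
    also have "\<dots> \<le> \<bar>a\<bar> * d + \<bar>b\<bar> * d"
    proof -
      have u: "\<bar>f t - (c1 0 + (\<Sum>j=1..m1. c1 j * t powr lam j))\<bar> \<le> d"
        "\<bar>g t - (c2 0 + (\<Sum>j=1..m2. c2 j * t powr lam j))\<bar> \<le> d" using 1 2 t by (auto intro: less_imp_le)
      have "\<bar>a * (f t - (c1 0 + (\<Sum>j=1..m1. c1 j * t powr lam j))) + b * (g t - (c2 0 + (\<Sum>j=1..m2. c2 j * t powr lam j)))\<bar>
         \<le> \<bar>a\<bar> * \<bar>f t - (c1 0 + (\<Sum>j=1..m1. c1 j * t powr lam j))\<bar> + \<bar>b\<bar> * \<bar>g t - (c2 0 + (\<Sum>j=1..m2. c2 j * t powr lam j))\<bar>"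
        by (rule abs_lin_le)
      also have "\<dots> \<le> \<bar>a\<bar> * d + \<bar>b\<bar> * d"
        by (intro add_mono mult_left_mono u abs_ge_zero)
      finally show ?thesis .
    qed
    also have "\<dots> < \<epsilon>"
    proof -
      have p: "\<bar>a\<bar> + \<bar>b\<bar> + 1 > 0" by (simp add: add_nonneg_pos)
      have "(\<bar>a\<bar> + \<bar>b\<bar>) * d < (\<bar>a\<bar> + \<bar>b\<bar> + 1) * d" using d by simp
      also have "\<dots> = \<epsilon>/2" unfolding d_def using p by (simp add: field_simps)
      finally show ?thesis using e by (simp add: algebra_simps)
    qed
    finally show "\<bar>a * f t + b * g t - (c 0 + (\<Sum>j = 1..M. c j * t powr lam j))\<bar> < \<epsilon>" .
  qed
qed

lemma apx_sum:
  assumes "finite K" "\<And>k. k \<in> K \<Longrightarrow> apx lam (g k)"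
  shows "apx lam (\<lambda>t. \<Sum>k\<in>K. a k * g k t)"
  using assms
proof (induction K rule: finite_induct)
  case empty
  then show ?case using apx_const[of lam 0] by simp
next
  case (insert x F)
  then have "apx lam (\<lambda>t. a x * g x t + 1 * (\<Sum>k\<in>F. a k * g k t))"
    by (intro apx_lin) auto
  then show ?case using insert by simp
qed

lemma apx_limit:
  assumes "\<And>\<epsilon>. \<epsilon> > 0 \<Longrightarrow> \<exists>g. apx lam g \<and> (\<forall>t\<in>{0..1}. \<bar>f t - g t\<bar> \<le> \<epsilon>)"
  shows "apx lam f"
  unfolding apx_def
proof (intro allI impI)
  fix \<epsilon> :: real assume e: "\<epsilon> > 0"
  obtain g where g: "apx lam g" "\<forall>t\<in>{0..1}. \<bar>f t - g t\<bar> \<le> \<epsilon>/2" using assms[of "\<epsilon>/2"] e by auto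
  obtain m c where mc: "\<forall>t\<in>{0..1}. \<bar>g t - (c 0 + (\<Sum>j=1..m. c j * t powr lam j))\<bar> < \<epsilon>/2"
    using g(1) e unfolding apx_def by (meson half_gt_zero)
  show "\<exists>m c. \<forall>t\<in>{0..1}. \<bar>f t - (c 0 + (\<Sum>j=1..m. c j * t powr lam j))\<bar> < \<epsilon>"
  proof (intro exI[of _ m] exI[of _ c] ballI)
    fix t :: real assume t: "t \<in> {0..1}"
    have "\<bar>f t - g t\<bar> \<le> \<epsilon>/2" "\<bar>g t - (c 0 + (\<Sum>j=1..m. c j * t powr lam j))\<bar> < \<epsilon>/2"
      using g(2) mc t by auto
    then show "\<bar>f t - (c 0 + (\<Sum>j=1..m. c j * t powr lam j))\<bar> < \<epsilon>" by linarith
  qed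
qed


lemma step_lemma:
  fixes K :: "nat set" and E b :: "nat \<Rightarrow> real" and l M :: real
  assumes K: "finite K" and l: "l > 0" and El: "\<And>k. k \<in> K \<Longrightarrow> E k \<noteq> l"
    and bd: "\<And>y. 0 < y \<Longrightarrow> y \<le> 1 \<Longrightarrow> \<bar>\<Sum>k\<in>K. b k * y powr E k\<bar> \<le> M"
    and x: "0 < x" "x \<le> 1"
  shows "\<bar>\<Sum>k\<in>K. b k / (l - E k) * (x powr E k - x powr l)\<bar> \<le> M / l"
proof -
  define P where "P y = (\<Sum>k\<in>K. b k * y powr E k)" for y
  define g where "g y = (\<Sum>k\<in>K. b k / (l - E k) * (y powr (E k - l) - 1))" for y
  define h where "h y = M * (y powr (- l) - 1) / l" for y
  have M0: "M \<ge> 0" using bd[of 1] by (meson abs_ge_zero order_trans order_refl zero_less_one)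
  have dg: "(g has_real_derivative - (y powr (- l - 1) * P y)) (at y)" if "y > 0" for y
  proof -
    have "(g has_real_derivative (\<Sum>k\<in>K. b k / (l - E k) * ((E k - l) * y powr (E k - l - 1)))) (at y)"
      unfolding g_def using that
      by (auto intro!: derivative_eq_intros DERIV_sum has_real_derivative_powr dest: El)
    moreover have "(\<Sum>k\<in>K. b k / (l - E k) * ((E k - l) * y powr (E k - l - 1))) = - (y powr (- l - 1) * P y)"
    proof -
      have "b k / (l - E k) * ((E k - l) * y powr (E k - l - 1)) = - (y powr (- l - 1) * (b k * y powr E k))" if "k \<in> K" for k
      proof -
        have "y powr (E k - l - 1) = y powr (- l - 1 + E k)" by (simp add: algebra_simps)
        also have "\<dots> = y powr (- l - 1) * y powr E k" by (rule powr_add)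
        finally have "y powr (E k - l - 1) = y powr (- l - 1) * y powr E k" .
        moreover have "l - E k \<noteq> 0" using El[OF that] by simp
        ultimately show ?thesis by (simp add: field_simps)
      qed
      then show ?thesis unfolding P_def by (simp add: sum_distrib_left sum_negf[symmetric])
    qed
    ultimately show ?thesis by simp
  qed
  have dh: "(h has_real_derivative - (y powr (- l - 1) * M)) (at y)" if "y > 0" for y
  proof -
    have "(h has_real_derivative M * ((- l) * y powr (- l - 1)) / l) (at y)"
      unfolding h_def using that by (auto intro!: derivative_eq_intros has_real_derivative_powr)
    then show ?thesis using l by (simp add: mult.commute)
  qed
  have g1: "g 1 = 0" by (simp add: g_def)
  have h1: "h 1 = 0" by (simp add: h_def)
  have up: "g x + h x \<ge> 0"
  proof -
    have "(\<lambda>y. g y + h y) 1 \<le> (\<lambda>y. g y + h y) x"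
    proof (rule DERIV_nonpos_imp_nonincreasing[OF x(2)])
      fix y assume y: "x \<le> y" "y \<le> 1"
      then have "y > 0" using x by simp
      have "P y \<ge> - M" using bd[of y] y \<open>y>0\<close> unfolding P_def by linarith
      moreover have "y powr (- l - 1) > 0" using \<open>y>0\<close> by simp
      ultimately have "- (y powr (- l - 1) * P y) + - (y powr (- l - 1) * M) \<le> 0"
        by (smt (verit, best) mult_left_mono distrib_left)
      then show "\<exists>d. ((\<lambda>y. g y + h y) has_real_derivative d) (at y) \<and> d \<le> 0"
        using DERIV_add[OF dg[OF \<open>y>0\<close>] dh[OF \<open>y>0\<close>]] by blast
    qed
    then show ?thesis using g1 h1 by simp
  qed
  have lo: "h x - g x \<ge> 0"
  proof -
    have "(\<lambda>y. h y - g y) 1 \<le> (\<lambda>y. h y - g y) x"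
    proof (rule DERIV_nonpos_imp_nonincreasing[OF x(2)])
      fix y assume y: "x \<le> y" "y \<le> 1"
      then have "y > 0" using x by simp
      have "P y \<le> M" using bd[of y] y \<open>y>0\<close> unfolding P_def by linarith
      moreover have "y powr (- l - 1) > 0" using \<open>y>0\<close> by simp
      ultimately have "- (y powr (- l - 1) * M) - - (y powr (- l - 1) * P y) \<le> 0"
        by (smt (verit, best) mult_left_mono right_diff_distrib)
      then show "\<exists>d. ((\<lambda>y. h y - g y) has_real_derivative d) (at y) \<and> d \<le> 0"
        using DERIV_diff[OF dh[OF \<open>y>0\<close>] dg[OF \<open>y>0\<close>]] by blast
    qed
    then show ?thesis using g1 h1 by simp
  qed
  have gx: "\<bar>g x\<bar> \<le> h x" using up lo by linarith
  have eq: "(\<Sum>k\<in>K. b k / (l - E k) * (x powr E k - x powr l)) = x powr l * g x"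
    unfolding g_def sum_distrib_left
  proof (rule sum.cong[OF refl])
    fix k assume "k \<in> K"
    have "x powr E k = x powr (l + (E k - l))" by simp
    also have "\<dots> = x powr l * x powr (E k - l)" by (rule powr_add)
    finally have "x powr E k = x powr l * x powr (E k - l)" .
    then show "b k / (l - E k) * (x powr E k - x powr l) = x powr l * (b k / (l - E k) * (x powr (E k - l) - 1))"
      by (simp add: algebra_simps)
  qed
  have "\<bar>x powr l * g x\<bar> \<le> x powr l * h x"
    using gx x by (simp add: abs_mult mult_left_mono)
  also have "x powr l * h x = M * (1 - x powr l) / l"
  proof -
    have "x powr l > 0" using x by simp
    then show ?thesis using l by (simp add: h_def powr_minus field_simps)
  qed
  also have "\<dots> \<le> M / l"
    using M0 l x by (simp add: divide_right_mono mult_left_le)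
  finally show ?thesis using eq by simp
qed


lemma powr_le1: assumes "0 \<le> x" "x \<le> 1" "0 \<le> (a::real)" shows "x powr a \<le> 1"
proof -
  have "x powr a \<le> 1 powr a" by (rule powr_mono2) (use assms in auto)
  then show ?thesis by simp
qed

lemma elim_lemma:
  fixes E :: "nat \<Rightarrow> real"
  assumes pos: "\<And>k. E k > 0" and inj: "inj E"
  shows "\<exists>b. b 0 = 1 \<and> (\<forall>x. 0 < x \<longrightarrow> x \<le> 1 \<longrightarrow>
           \<bar>\<Sum>k=0..n. b k * x powr E k\<bar> \<le> (\<Prod>k=1..n. \<bar>1 - E 0 / E k\<bar>))"
proof (induction n)
  case 0
  show ?case using pos[of 0] by (intro exI[of _ "\<lambda>_. 1"]) (auto intro!: powr_le1)
next
  case (Suc n)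
  then obtain b where b0: "b 0 = 1" and bd: "\<And>x. 0 < x \<Longrightarrow> x \<le> 1 \<Longrightarrow>
           \<bar>\<Sum>k=0..n. b k * x powr E k\<bar> \<le> (\<Prod>k=1..n. \<bar>1 - E 0 / E k\<bar>)" by blast
  define l where "l = E (Suc n)"
  define M where "M = (\<Prod>k=1..n. \<bar>1 - E 0 / E k\<bar>)"
  have l: "l > 0" using pos by (simp add: l_def)
  have El: "E k \<noteq> l" if "k \<in> {0..n}" for k
    using that inj unfolding l_def inj_def by fastforce
  define b' where "b' k = (if k \<le> n then (l - E 0) * b k / (l - E k)
      else - (\<Sum>j=0..n. (l - E 0) * b j / (l - E j)))" for k
  have "b' 0 = 1" using El[of 0] b0 by (simp add: b'_def)
  moreover have "\<bar>\<Sum>k=0..Suc n. b' k * x powr E k\<bar> \<le> (\<Prod>k=1..Suc n. \<bar>1 - E 0 / E k\<bar>)"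
    if x: "0 < x" "x \<le> 1" for x
  proof -
    have "(\<Sum>k=0..Suc n. b' k * x powr E k)
        = (\<Sum>k=0..n. (l - E 0) * b k / (l - E k) * x powr E k)
          - (\<Sum>j=0..n. (l - E 0) * b j / (l - E j)) * x powr l"
      by (simp add: b'_def l_def)
    also have "\<dots> = (l - E 0) * (\<Sum>k\<in>{0..n}. b k / (l - E k) * (x powr E k - x powr l))"
      by (simp add: sum_distrib_left sum_distrib_right sum_subtractf[symmetric] algebra_simps)
    finally have eq: "(\<Sum>k=0..Suc n. b' k * x powr E k) = (l - E 0) * (\<Sum>k\<in>{0..n}. b k / (l - E k) * (x powr E k - x powr l))" .
    have "\<bar>\<Sum>k\<in>{0..n}. b k / (l - E k) * (x powr E k - x powr l)\<bar> \<le> M / l"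
      by (rule step_lemma[OF _ l El _ x]) (use bd in \<open>auto simp: M_def\<close>)
    then have "\<bar>\<Sum>k=0..Suc n. b' k * x powr E k\<bar> \<le> \<bar>l - E 0\<bar> * (M / l)"
      unfolding eq abs_mult by (rule mult_left_mono) auto
    also have "\<dots> = \<bar>1 - E 0 / l\<bar> * M"
    proof -
      have "1 - E 0 / l = (l - E 0) / l" using l by (simp add: diff_divide_distrib)
      then have "\<bar>1 - E 0 / l\<bar> = \<bar>l - E 0\<bar> / l" using l by simp
      then show ?thesis by simp
    qed
    also have "\<dots> = (\<Prod>k=1..Suc n. \<bar>1 - E 0 / E k\<bar>)"
      by (simp add: M_def l_def mult.commute)
    finally show ?thesis .
  qed
  ultimately show ?case by blast
qed


lemma apx_cong: assumes "apx lam f" "\<And>t. t \<in> {0..1} \<Longrightarrow> f t = g t" shows "apx lam g"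
  using assms unfolding apx_def by simp

lemma apx_from_elim:
  fixes lam e :: "nat \<Rightarrow> real" and \<mu> :: real
  assumes \<mu>: "\<mu> > 0" and epos: "\<And>k. e k > 0" and inj: "inj e" and ne: "\<And>k. e k \<noteq> \<mu>"
    and ea: "\<And>k. apx lam (\<lambda>t. t powr e k)"
    and small: "\<And>\<epsilon>. \<epsilon> > 0 \<Longrightarrow> \<exists>n. (\<Prod>k=1..n. \<bar>1 - \<mu> / e k\<bar>) < \<epsilon>"
  shows "apx lam (\<lambda>t. t powr \<mu>)"
proof (rule apx_limit)
  fix \<epsilon> :: real assume "\<epsilon> > 0"
  then obtain n where n: "(\<Prod>k=1..n. \<bar>1 - \<mu> / e k\<bar>) < \<epsilon>" using small by blast
  define E where "E k = (if k = 0 then \<mu> else e k)" for k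
  have Epos: "E k > 0" for k using \<mu> epos by (simp add: E_def)
  have Einj: "inj E"
    unfolding inj_def E_def using inj ne by (auto simp: inj_def)
  obtain b where b0: "b 0 = 1" and bd: "\<And>x. 0 < x \<Longrightarrow> x \<le> 1 \<Longrightarrow>
      \<bar>\<Sum>k=0..n. b k * x powr E k\<bar> \<le> (\<Prod>k=1..n. \<bar>1 - E 0 / E k\<bar>)"
    using elim_lemma[OF Epos Einj, of n] by blast
  have prodE: "(\<Prod>k=1..n. \<bar>1 - E 0 / E k\<bar>) = (\<Prod>k=1..n. \<bar>1 - \<mu> / e k\<bar>)"
    by (rule prod.cong) (auto simp: E_def)
  define g where "g t = (\<Sum>k\<in>{1..n}. (- b k) * t powr e k)" for t
  have "apx lam g" unfolding g_def by (rule apx_sum) (auto intro: ea)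
  moreover have "\<bar>t powr \<mu> - g t\<bar> \<le> \<epsilon>" if t: "t \<in> {0..1}" for t
  proof (cases "t = 0")
    case True
    then show ?thesis using \<open>\<epsilon>>0\<close> by (simp add: g_def)
  next
    case False
    then have t0: "0 < t" using t by simp
    have "(\<Sum>k=0..n. b k * t powr E k) = b 0 * t powr E 0 + (\<Sum>k=Suc 0..n. b k * t powr E k)"
      by (rule sum.atLeast_Suc_atMost) simp
    also have "(\<Sum>k=Suc 0..n. b k * t powr E k) = (\<Sum>k=1..n. b k * t powr e k)"
      by (rule sum.cong) (auto simp: E_def)
    finally have "t powr \<mu> - g t = (\<Sum>k=0..n. b k * t powr E k)"
      by (simp add: g_def b0 E_def sum_negf)
    then show ?thesis using bd[OF t0] t prodE n by auto
  qed
  ultimately show "\<exists>g. apx lam g \<and> (\<forall>t\<in>{0..1}. \<bar>t powr \<mu> - g t\<bar> \<le> \<epsilon>)" by blast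
qed

lemma apx_interval:
  fixes lam e :: "nat \<Rightarrow> real" and \<nu> a b :: real
  assumes a: "0 < a" and ab: "a \<le> b" and inj: "inj e" and eab: "\<And>k. a \<le> e k \<and> e k \<le> b"
    and ea: "\<And>k. apx lam (\<lambda>t. t powr e k)" and \<nu>: "0 < \<nu>" "\<nu> < 2 * a" and ne: "\<And>k. e k \<noteq> \<nu>"
  shows "apx lam (\<lambda>t. t powr \<nu>)"
proof (rule apx_from_elim[OF \<nu>(1) _ inj ne ea])
  show "e k > 0" for k using eab[of k] a by linarith
  define \<rho> where "\<rho> = max (1 - \<nu> / b) (\<nu> / a - 1)"
  have \<rho>0: "\<rho> \<ge> 0"
  proof (cases "\<nu> < a")
    case True then have "\<nu> / b < 1" using ab a \<nu> by (simp add: divide_less_eq)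
    then show ?thesis unfolding \<rho>_def by linarith
  next
    case False then have "\<nu> / a \<ge> 1" using a by (simp add: le_divide_eq)
    then show ?thesis unfolding \<rho>_def by linarith
  qed
  have \<rho>1: "\<rho> < 1"
  proof -
    have "\<nu> / b > 0" using \<nu> a ab by simp
    moreover have "\<nu> / a < 2" using \<nu> a by (simp add: divide_less_eq)
    ultimately show ?thesis unfolding \<rho>_def by linarith
  qed
  have fac: "\<bar>1 - \<nu> / e k\<bar> \<le> \<rho>" for k
  proof -
    have ek: "a \<le> e k" "e k \<le> b" "e k > 0" using eab[of k] a by auto
    show ?thesis
    proof (cases "\<nu> \<le> e k")
      case True
      then have "\<nu> / e k \<le> 1" using ek by (simp add: divide_le_eq)
      moreover have "\<nu> / b \<le> \<nu> / e k" using ek \<nu> by (simp add: frac_le)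
      ultimately show ?thesis unfolding \<rho>_def by (simp add: abs_if)
    next
      case False
      then have "\<nu> / e k > 1" using ek by (simp add: less_divide_eq)
      moreover have "\<nu> / e k \<le> \<nu> / a" using ek \<nu> a by (simp add: frac_le)
      ultimately show ?thesis unfolding \<rho>_def by (simp add: abs_if)
    qed
  qed
  fix \<epsilon> :: real assume "\<epsilon> > 0"
  obtain n where n: "\<rho> ^ n < \<epsilon>" using real_arch_pow_inv[OF \<open>\<epsilon>>0\<close> \<rho>1] by blast
  have "(\<Prod>k=1..n. \<bar>1 - \<nu> / e k\<bar>) \<le> (\<Prod>k=1..n. \<rho>)"
    by (rule prod_mono) (use fac in auto)
  also have "\<dots> = \<rho> ^ n" by simp
  finally show "\<exists>n. (\<Prod>k=1..n. \<bar>1 - \<nu> / e k\<bar>) < \<epsilon>" using n by (intro exI[of _ n]) linarith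
qed


lemma div_less_helper: "0 < (c::real) \<Longrightarrow> a / c < b \<Longrightarrow> a < c * b"
  by (simp add: pos_divide_less_eq mult.commute)

lemma muntz_powers:
  fixes lam :: "nat \<Rightarrow> real" and \<nu> :: real
  assumes lam_distinct: "inj_on lam {1..}"
    and lam_pos: "\<And>i. i \<ge> 1 \<Longrightarrow> lam i > 0"
    and lam_inf: "\<exists>\<delta>>0. \<forall>i\<ge>1. lam i \<ge> \<delta>"
    and lam_div: "\<not> summable (\<lambda>i. 1 / lam (Suc i))"
    and \<nu>: "\<nu> > 0"
  shows "apx lam (\<lambda>t. t powr \<nu>)"
proof (cases "\<nu> \<in> lam ` {1..}")
  case True
  then obtain i where "i \<ge> 1" "\<nu> = lam i" by auto
  then show ?thesis using apx_pow[of i lam] by simp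
next
  case notin: False
  show ?thesis
  proof (cases "\<exists>B. infinite {i. 1 \<le> i \<and> lam i \<le> B}")
    case True
    then obtain B where inf: "infinite {i. 1 \<le> i \<and> lam i \<le> B}" by blast
    then obtain f :: "nat \<Rightarrow> nat" where f: "inj f" "range f \<subseteq> {i. 1 \<le> i \<and> lam i \<le> B}"
      using infinite_iff_countable_subset[THEN iffD1, OF inf] by blast
    obtain \<delta> where \<delta>: "\<delta> > 0" "\<And>i. i \<ge> 1 \<Longrightarrow> lam i \<ge> \<delta>" using lam_inf by blast
    define P where "P a \<longleftrightarrow> (\<forall>\<nu>. 0 < \<nu> \<and> \<nu> < a \<longrightarrow> apx lam (\<lambda>t. t powr \<nu>))" for a
    have P0: "P (2 * \<delta>)" unfolding P_def
    proof (intro allI impI)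
      fix \<mu> :: real assume \<mu>: "0 < \<mu> \<and> \<mu> < 2 * \<delta>"
      show "apx lam (\<lambda>t. t powr \<mu>)"
      proof (cases "\<mu> \<in> lam ` {1..}")
        case True
        then obtain i where "i \<ge> 1" "\<mu> = lam i" by auto
        then show ?thesis using apx_pow[of i lam] by simp
      next
        case False
        have fk: "f k \<ge> 1" "lam (f k) \<le> B" for k using f(2) by auto
        have injc: "inj (\<lambda>k. lam (f k))"
          unfolding inj_def
        proof (intro allI impI)
          fix x y assume "lam (f x) = lam (f y)"
          then have "f x = f y" using inj_onD[OF lam_distinct] fk by auto
          then show "x = y" using f(1) by (simp add: inj_eq)
        qed
        have dB: "\<delta> \<le> B" using \<delta>(2)[OF fk(1)[of 0]] fk(2)[of 0] by linarith
        show ?thesis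
          by (rule apx_interval[OF \<delta>(1) dB injc, of lam])
             (use fk \<delta> \<mu> False in \<open>auto intro: apx_pow\<close>)
      qed
    qed
    have Pstep: "P (3 * a / 2)" if a: "a > 0" and Pa: "P a" for a
      unfolding P_def
    proof (intro allI impI)
      fix \<mu> :: real assume \<mu>: "0 < \<mu> \<and> \<mu> < 3 * a / 2"
      show "apx lam (\<lambda>t. t powr \<mu>)"
      proof (cases "\<mu> < a")
        case True then show ?thesis using Pa \<mu> unfolding P_def by blast
      next
        case False
        define e where "e k = a - a / (4 * (real k + 1))" for k
        have ebd: "3 * a / 4 \<le> e k \<and> e k < a" for k
        proof -
          have "a / (4 * (real k + 1)) \<le> a / 4" using a by (intro divide_left_mono) auto
          moreover have "a / (4 * (real k + 1)) > 0" using a by simp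
          ultimately show ?thesis unfolding e_def by linarith
        qed
        have "strict_mono e"
          unfolding strict_mono_def e_def
        proof (intro allI impI)
          fix x y :: nat assume "x < y"
          then have "a / (4 * (real y + 1)) < a / (4 * (real x + 1))"
            using a by (simp add: frac_less2)
          then show "a - a / (4 * (real x + 1)) < a - a / (4 * (real y + 1))" by simp
        qed
        then have injc: "inj e" by (rule strict_mono_imp_inj_on)
        show ?thesis
        proof (rule apx_interval[of "3 * a / 4" "a" e])
          show "apx lam (\<lambda>t. t powr e k)" for k
          proof -
            have "0 < e k" "e k < a" using ebd[of k] a by linarith+
            then show ?thesis using Pa unfolding P_def by blast
          qed
          show "0 < 3 * a / 4" using a by simp
          show "3 * a / 4 \<le> a" using a by simp
          show "inj e" by (rule injc)
          show "3 * a / 4 \<le> e k \<and> e k \<le> a" for k using ebd[of k] by simp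
          show "0 < \<mu>" using \<mu> by simp
          show "\<mu> < 2 * (3 * a / 4)" using \<mu> by simp
          show "e k \<noteq> \<mu>" for k using ebd[of k] False by simp
        qed
      qed
    qed
    have Pk: "P (2 * \<delta> * (3/2) ^ k)" for k
    proof (induction k)
      case 0 then show ?case using P0 by simp
    next
      case (Suc k)
      have "P (3 * (2 * \<delta> * (3/2) ^ k) / 2)"
        by (rule Pstep[OF _ Suc]) (use \<delta> in simp)
      then show ?case by (simp add: algebra_simps)
    qed
    obtain k where k: "\<nu> / (2 * \<delta>) < (3/2) ^ k" using real_arch_pow[of "3/2" "\<nu> / (2 * \<delta>)"] by auto
    then have "\<nu> < 2 * \<delta> * (3/2) ^ k" using \<delta> by (simp add: divide_less_eq mult.commute)
    then show ?thesis using Pk[of k] \<nu> unfolding P_def by blast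
  next
    case False
    then have fin: "finite {i. 1 \<le> i \<and> lam i \<le> \<nu>}" by blast
    define K where "K = Suc (Max (insert 0 {i. 1 \<le> i \<and> lam i \<le> \<nu>}))"
    have K1: "K \<ge> 1" by (simp add: K_def)
    have Kbig: "lam i > \<nu>" if "i \<ge> K" for i
    proof (rule ccontr)
      assume "\<not> lam i > \<nu>"
      then have "i \<in> insert 0 {i. 1 \<le> i \<and> lam i \<le> \<nu>}" using that K1 by auto
      then have "i \<le> Max (insert 0 {i. 1 \<le> i \<and> lam i \<le> \<nu>})" using fin by simp
      then show False using that by (simp add: K_def)
    qed
    define e where "e k = lam (k + K)" for k
    have egt: "e k > \<nu>" for k using Kbig by (simp add: e_def)
    have injc: "inj e"
      unfolding inj_def e_def
    proof (intro allI impI)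
      fix x y assume "lam (x + K) = lam (y + K)"
      moreover have "x + K \<in> {1..}" "y + K \<in> {1..}" using K1 by auto
      ultimately have "x + K = y + K" by (rule inj_onD[OF lam_distinct])
      then show "x = y" by simp
    qed
    show ?thesis
    proof (rule apx_from_elim[OF \<nu> _ injc])
      show "e k > 0" for k using egt[of k] \<nu> by linarith
      show "e k \<noteq> \<nu>" for k using egt[of k] by simp
      show "apx lam (\<lambda>t. t powr e k)" for k unfolding e_def using apx_pow[of "k + K" lam] K1 by simp
      fix \<epsilon> :: real assume \<epsilon>: "\<epsilon> > 0"
      define F where "F i = 1 / lam (Suc i)" for i
      have Feq: "F = (\<lambda>i. 1 / lam (Suc i))" by (simp add: fun_eq_iff F_def)
      have "\<not> summable (\<lambda>i. F (i + K))" using lam_div summable_iff_shift[of F K] unfolding Feq by simp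
      moreover have Fnn: "F (i + K) \<ge> 0" for i using lam_pos[of "Suc (i + K)"] by (simp add: F_def)
      ultimately obtain n where n: "(\<Sum>i<n. F (i + K)) > - ln \<epsilon> / \<nu>"
        using summableI_nonneg_bounded[of "\<lambda>i. F (i + K)" "- ln \<epsilon> / \<nu>"] by (meson not_le)
      have sumeq: "(\<Sum>k=1..n. 1 / e k) = (\<Sum>i<n. F (i + K))"
        by (induction n) (simp_all add: F_def e_def)
      have "(\<Prod>k=1..n. \<bar>1 - \<nu> / e k\<bar>) \<le> (\<Prod>k=1..n. exp (- (\<nu> * (1 / e k))))"
      proof (rule prod_mono)
        fix k assume "k \<in> {1..n}"
        have "\<nu> / e k < 1" "\<nu> / e k > 0" using egt[of k] \<nu> by (auto simp: divide_less_eq)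
        moreover have "1 + (- (\<nu> / e k)) \<le> exp (- (\<nu> / e k))" by (rule exp_ge_add_one_self)
        ultimately show "0 \<le> \<bar>1 - \<nu> / e k\<bar> \<and> \<bar>1 - \<nu> / e k\<bar> \<le> exp (- (\<nu> * (1 / e k)))" by simp
      qed
      also have "\<dots> = exp (- (\<nu> * (\<Sum>k=1..n. 1 / e k)))"
        by (simp add: exp_sum[symmetric] sum_distrib_left sum_negf)
      also have "\<dots> < exp (ln \<epsilon>)"
      proof -
        have "- ln \<epsilon> < \<nu> * (\<Sum>k=1..n. 1 / e k)" using div_less_helper[OF \<nu> n] unfolding sumeq .
        then show ?thesis by simp
      qed
      also have "\<dots> = \<epsilon>" using \<epsilon> by simp
      finally show "\<exists>n. (\<Prod>k=1..n. \<bar>1 - \<nu> / e k\<bar>) < \<epsilon>" by blast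
    qed
  qed
qed

lemma muntz_dense:
  fixes lam :: "nat \<Rightarrow> real" and f :: "real \<Rightarrow> real"
  assumes lam_distinct: "inj_on lam {1..}"
    and lam_pos: "\<And>i. i \<ge> 1 \<Longrightarrow> lam i > 0"
    and lam_inf: "\<exists>\<delta>>0. \<forall>i\<ge>1. lam i \<ge> \<delta>"
    and lam_div: "\<not> summable (\<lambda>i. 1 / lam (Suc i))"
    and f: "continuous_on {0..1} f"
  shows "apx lam f"
proof -
  have mono: "apx lam (\<lambda>t. t ^ i)" for i
  proof (cases "i = 0")
    case True then show ?thesis using apx_const[of lam 1] by simp
  next
    case False
    then have ip: "i > 0" by simp
    have ip': "real i > 0" using ip by simp
    have "apx lam (\<lambda>t. t powr real i)"
      by (rule muntz_powers[OF assms(1-4) ip'])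
    then show ?thesis
    proof (rule apx_cong)
      fix t :: real assume "t \<in> {0..1}"
      then show "t powr real i = t ^ i" using ip by (cases "t = 0") (auto simp: powr_realpow)
    qed
  qed
  show ?thesis
  proof (rule apx_limit)
    fix \<epsilon> :: real assume "\<epsilon> > 0"
    obtain g where g: "real_polynomial_function g" "\<And>x. x \<in> {0..1} \<Longrightarrow> \<bar>f x - g x\<bar> < \<epsilon>"
      using Stone_Weierstrass_real_polynomial_function[OF compact_Icc f \<open>\<epsilon>>0\<close>] by blast
    obtain a n where gs: "g = (\<lambda>x. \<Sum>i\<le>n. a i * x ^ i)" using real_polynomial_function_imp_sum[OF g(1)] by blast
    have "apx lam g" unfolding gs by (rule apx_sum) (auto intro: mono)
    moreover have "\<forall>t\<in>{0..1}. \<bar>f t - g t\<bar> \<le> \<epsilon>"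
    proof
      fix t :: real assume "t \<in> {0..1}"
      then show "\<bar>f t - g t\<bar> \<le> \<epsilon>" using g(2)[of t] by linarith
    qed
    ultimately show "\<exists>g. apx lam g \<and> (\<forall>t\<in>{0..1}. \<bar>f t - g t\<bar> \<le> \<epsilon>)" by blast
  qed
qed


lemma qint_sum: "qint q k = (\<Sum>j<k. q ^ j)"
  by (simp add: qint_def sum_gp_strict)

lemma qint_0[simp]: "qint q 0 = 0" by (simp add: qint_sum)

lemma qint_Suc: "qint q (Suc k) = qint q k + q ^ k" by (simp add: qint_sum)

lemma qint_add: "qint q (a + b) = qint q a + q ^ a * qint q b"
  by (induction b) (simp_all add: qint_Suc algebra_simps power_add)

lemma qint_nonneg: "0 \<le> q \<Longrightarrow> 0 \<le> qint q k"
  by (simp add: qint_sum sum_nonneg)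

lemma qint_pos: "0 < q \<Longrightarrow> 1 \<le> k \<Longrightarrow> 0 < qint q k"
proof (induction k)
  case 0 then show ?case by simp
next
  case (Suc k)
  then show ?case by (cases "k = 0") (auto simp: qint_Suc intro: add_nonneg_pos qint_nonneg)
qed

lemma qint_mono: "0 \<le> q \<Longrightarrow> a \<le> b \<Longrightarrow> qint q a \<le> qint q b"
  using qint_add[of q a "b - a"] by (simp add: qint_nonneg)

lemma qfact_pos: "0 < q \<Longrightarrow> 0 < qfact q n"
  by (auto simp: qfact_def intro!: prod_pos qint_pos)

lemma qfact_Suc: "qfact q (Suc n) = qfact q n * qint q (Suc n)"
  by (simp add: qfact_def)

lemma qfact_0[simp]: "qfact q 0 = 1" by (simp add: qfact_def)

definition ab :: "real \<Rightarrow> nat \<Rightarrow> nat \<Rightarrow> real" where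
  "ab q n k = qfact q (n + k) / (qfact q k * qfact q n)"

lemma qbinom_ab: "qbinom q (n + k) k = ab q n k"
  by (simp add: qbinom_def ab_def)

lemma ab_n0: "0 < q \<Longrightarrow> ab q n 0 = 1"
  using qfact_pos[of q n] by (simp add: ab_def)

lemma ab_0k: "0 < q \<Longrightarrow> ab q 0 k = 1"
  using qfact_pos[of q k] by (simp add: ab_def)

lemma ab_nonneg: assumes "0 < q" shows "0 \<le> ab q n k"
proof -
  have "qfact q (n+k) > 0" "qfact q k * qfact q n > 0" using qfact_pos[OF assms] by auto
  then show ?thesis unfolding ab_def by simp
qed

lemma ab_pascal:
  assumes q: "0 < q"
  shows "ab q (Suc n) (Suc k) = q ^ Suc n * ab q (Suc n) k + ab q n (Suc k)"
proof -
  define m where "m = n + k + 1"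
  have e1: "qfact q (Suc n + Suc k) = qfact q m * (qint q (Suc n) + q ^ Suc n * qint q (Suc k))"
    unfolding m_def using qint_add[of q "Suc n" "Suc k"] qfact_Suc[of q "n + k + 1"] by simp
  have e2: "Suc n + k = m" "n + Suc k = m" by (simp_all add: m_def)
  have p: "qfact q k > 0" "qfact q n > 0" "qfact q m > 0" "qint q (Suc k) > 0" "qint q (Suc n) > 0"
    using q by (auto simp: qfact_pos qint_pos)
  show ?thesis
    unfolding ab_def e1 e2 qfact_Suc using p by (simp add: field_simps)
qed

lemma ab_shift:
  assumes q: "0 < q"
  shows "ab q n (Suc k) * (qint q (Suc k) / qint q (Suc k + n)) = ab q n k"
proof -
  have e: "n + Suc k = Suc (n + k)" "Suc k + n = Suc (n + k)" by simp_all
  have p: "qfact q k > 0" "qfact q n > 0" "qfact q (n + k) > 0" "qint q (Suc k) > 0" "qint q (Suc (n + k)) > 0"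
    using q by (auto simp: qfact_pos qint_pos)
  show ?thesis unfolding ab_def e qfact_Suc using p by (simp add: field_simps)
qed

lemma qseries:
  assumes q: "0 < q" "q \<le> 1" and x: "0 \<le> x" "x < 1"
  shows "summable (\<lambda>k. ab q n k * x ^ k) \<and>
         (\<Prod>j=0..n. 1 - q ^ j * x) * (\<Sum>k. ab q n k * x ^ k) = 1"
proof (induction n)
  case 0
  have "summable (\<lambda>k. x ^ k)" using x by (simp add: summable_geometric)
  moreover have "(\<Sum>k. x ^ k) = 1 / (1 - x)" using x by (simp add: suminf_geometric)
  ultimately show ?case using ab_0k[OF q(1)] x by simp
next
  case (Suc n)
  define c where "c k = ab q n k * x ^ k" for k
  define b where "b k = ab q (Suc n) k * x ^ k" for k
  define r where "r = q ^ Suc n * x"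
  define F where "F = suminf c"
  have ceq: "c = (\<lambda>k. ab q n k * x ^ k)" by (simp add: fun_eq_iff c_def)
  have sc: "summable c" using Suc unfolding ceq by simp
  have cnn: "c k \<ge> 0" for k using ab_nonneg[OF q(1)] x by (simp add: c_def)
  have bnn: "b k \<ge> 0" for k using ab_nonneg[OF q(1)] x by (simp add: b_def)
  have r: "0 \<le> r" "r < 1"
  proof -
    show "0 \<le> r" using q x by (simp add: r_def)
    have "q ^ Suc n \<le> 1" by (rule power_le_one) (use q in auto)
    then have "r \<le> x" unfolding r_def by (intro mult_left_le_one_le) (use q x in auto)
    then show "r < 1" using x by simp
  qed
  have b0: "b 0 = 1" "c 0 = 1" using ab_n0[OF q(1)] by (simp_all add: b_def c_def)
  have brec: "b (Suc k) = r * b k + c (Suc k)" for k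
    unfolding b_def c_def r_def using ab_pascal[OF q(1), of n k] by (simp add: algebra_simps)
  have Srec: "(\<Sum>i<Suc K. b i) = r * (\<Sum>i<K. b i) + (\<Sum>i<Suc K. c i)" for K
  proof (induction K)
    case 0 then show ?case using b0 by simp
  next
    case (Suc K)
    have "(\<Sum>i<Suc (Suc K). b i) = (\<Sum>i<Suc K. b i) + b (Suc K)" by simp
    also have "\<dots> = r * (\<Sum>i<K. b i) + (\<Sum>i<Suc K. c i) + r * b K + c (Suc K)"
      using Suc brec by simp
    also have "\<dots> = r * (\<Sum>i<Suc K. b i) + (\<Sum>i<Suc (Suc K). c i)"
      by (simp add: algebra_simps)
    finally show ?case .
  qed
  have Cle: "(\<Sum>i<K. c i) \<le> F" for K
    unfolding F_def using sc cnn by (intro sum_le_suminf) auto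
  have F0: "F \<ge> 0" unfolding F_def using sc cnn by (intro suminf_nonneg) auto
  have Sle: "(\<Sum>i<K. b i) \<le> F / (1 - r)" for K
  proof (induction K)
    case 0 then show ?case using F0 r by simp
  next
    case (Suc K)
    have "(\<Sum>i<Suc K. b i) \<le> r * (F / (1 - r)) + F"
      unfolding Srec using Suc Cle[of "Suc K"] r by (intro add_mono mult_left_mono) auto
    also have "\<dots> = F / (1 - r)" using r by (simp add: field_simps)
    finally show ?case .
  qed
  have sb: "summable b" by (rule summableI_nonneg_bounded[OF bnn Sle])
  define B where "B = suminf b"
  have l1: "(\<lambda>K. \<Sum>i<Suc K. b i) \<longlonglongrightarrow> B"
    unfolding B_def using summable_LIMSEQ[OF sb] by (rule LIMSEQ_Suc)
  have l2: "(\<lambda>K. r * (\<Sum>i<K. b i) + (\<Sum>i<Suc K. c i)) \<longlonglongrightarrow> r * B + F"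
    unfolding B_def F_def
    by (rule tendsto_add[OF tendsto_mult[OF tendsto_const summable_LIMSEQ[OF sb]] LIMSEQ_Suc[OF summable_LIMSEQ[OF sc]]])
  have l1': "(\<lambda>K. r * (\<Sum>i<K. b i) + (\<Sum>i<Suc K. c i)) \<longlonglongrightarrow> B"
    using l1 unfolding Srec .
  have "B = r * B + F" by (rule LIMSEQ_unique[OF l1' l2])
  then have BF: "B * (1 - r) = F" by (simp add: algebra_simps)
  have peq: "(\<Prod>j=0..Suc n. 1 - q ^ j * x) = (\<Prod>j=0..n. 1 - q ^ j * x) * (1 - r)"
    by (simp add: r_def)
  have "(\<Prod>j=0..Suc n. 1 - q ^ j * x) * B = (\<Prod>j=0..n. 1 - q ^ j * x) * F"
    unfolding peq BF[symmetric] by (simp only: mult_ac)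
  also have "\<dots> = 1" using Suc unfolding F_def ceq by simp
  moreover have beq: "b = (\<lambda>k. ab q (Suc n) k * x ^ k)" by (simp add: fun_eq_iff b_def)
  ultimately show ?case using sb unfolding B_def beq by simp
qed


lemma qint_mul: "(1 - q) * qint q k = 1 - q ^ k"
proof (induction k)
  case 0 then show ?case by simp
next
  case (Suc k)
  have "(1 - q) * qint q (Suc k) = (1 - q) * qint q k + (1 - q) * q ^ k" by (simp add: qint_Suc algebra_simps)
  also have "\<dots> = 1 - q ^ Suc k" using Suc by (simp add: algebra_simps)
  finally show ?case .
qed

lemma qint_ident: "qint q (Suc k) * qint q (k + n) - qint q k * qint q (Suc k + n) = q ^ k * qint q n"
proof -
  have a: "qint q (k + n) = qint q k + q ^ k * qint q n" by (rule qint_add)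
  have b: "qint q (Suc k + n) = qint q (Suc k) + q ^ Suc k * qint q n" by (rule qint_add)
  have c: "qint q (Suc k) = qint q k + q ^ k" by (rule qint_Suc)
  have d: "q * qint q k = qint q k - 1 + q ^ k" using qint_mul[of q k] by (simp add: algebra_simps)
  have "qint q (Suc k) * qint q (k + n) - qint q k * qint q (Suc k + n)
      = q ^ k * qint q n * (qint q k - q * qint q k + q ^ k)"
    unfolding a b c by (simp add: algebra_simps)
  also have "\<dots> = q ^ k * qint q n" unfolding d by simp
  finally show ?thesis .
qed

lemma t_range:
  assumes q: "0 < q" and n: "1 \<le> n"
  shows "0 \<le> qint q k / qint q (k + n) \<and> qint q k / qint q (k + n) \<le> 1"
proof -
  have p: "qint q (k + n) > 0" using q n by (intro qint_pos) auto
  have "qint q k \<le> qint q (k + n)" using q by (intro qint_mono) auto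
  then show ?thesis using p qint_nonneg[of q k] q by (simp add: divide_le_eq_1)
qed

lemma t_step:
  assumes q: "0 < q" "q \<le> 1" and n: "1 \<le> n"
  shows "qint q (Suc k) / qint q (Suc k + n) \<le> qint q k / qint q (k + n) + 1 / qint q n"
proof -
  define A where "A = qint q (Suc k + n)"
  define B where "B = qint q (k + n)"
  define Q where "Q = qint q n"
  have Q: "Q > 0" using q n by (simp add: Q_def qint_pos)
  have QA: "Q \<le> A" unfolding Q_def A_def using q by (intro qint_mono) auto
  have QB: "Q \<le> B" unfolding Q_def B_def using q by (intro qint_mono) auto
  have A: "A > 0" and B: "B > 0" using Q QA QB by auto
  have diff: "qint q (Suc k) / A - qint q k / B = q ^ k * Q / (A * B)"
    using qint_ident[of q k n] A B unfolding A_def[symmetric] B_def[symmetric] Q_def[symmetric]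
    by (simp add: field_simps)
  have qk: "q ^ k \<le> 1" "0 \<le> q ^ k" using q by (simp_all add: power_le_one)
  have "q ^ k * Q * Q \<le> 1 * (A * B)"
  proof -
    have "q ^ k * Q * Q \<le> 1 * Q * Q" using qk Q by (intro mult_right_mono) auto
    also have "\<dots> \<le> A * B" using QA QB Q by (simp add: mult_mono)
    finally show ?thesis by simp
  qed
  then have "q ^ k * Q / (A * B) \<le> 1 / Q" using A B Q by (simp add: field_simps)
  then show ?thesis using diff unfolding A_def B_def Q_def by linarith
qed

lemma summable_cmp:
  fixes f w :: "nat \<Rightarrow> real"
  assumes "summable w" "\<And>k. \<bar>f k\<bar> \<le> B * w k"
  shows "summable f"
  by (rule summable_comparison_test[of f "\<lambda>k. B * w k"]) (use assms in \<open>auto intro: summable_mult\<close>)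

lemma wle2: fixes w a B :: real assumes "0 \<le> w" "\<bar>a\<bar> \<le> B" shows "\<bar>w * a\<bar> \<le> B * w"
proof -
  have "\<bar>w * a\<bar> = w * \<bar>a\<bar>" using assms(1) by (simp add: abs_mult)
  also have "\<dots> \<le> w * B" using assms by (intro mult_left_mono) auto
  finally show ?thesis by (simp add: mult.commute)
qed

lemma mkz_est:
  fixes h :: "real \<Rightarrow> real"
  assumes q: "0 < q" "q \<le> 1" and n: "1 \<le> n" and x: "0 \<le> x" "x \<le> 1"
    and C: "0 \<le> C" and \<epsilon>: "0 \<le> \<epsilon>"
    and hb: "\<And>s y. s \<in> {0..1} \<Longrightarrow> y \<in> {0..1} \<Longrightarrow> \<bar>h s - h y\<bar> \<le> \<epsilon> + C * (s - y)^2"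
  shows "\<bar>MKZ n q h x - h x\<bar> \<le> \<epsilon> + C / qint q n"
proof (cases "x = 1")
  case True
  have "qint q n > 0" using q n by (simp add: qint_pos)
  then show ?thesis using True C \<epsilon> by (simp add: MKZ_def)
next
  case False
  then have x1: "x < 1" using x by simp
  define w where "w k = ab q n k * x ^ k" for k
  define t where "t k = qint q k / qint q (k + n)" for k
  define P where "P = (\<Prod>j=0..n. 1 - q ^ j * x)"
  define S where "S = suminf w"
  define Q where "Q = qint q n"
  have Q: "Q > 0" using q n by (simp add: Q_def qint_pos)
  have weq: "w = (\<lambda>k. ab q n k * x ^ k)" by (simp add: fun_eq_iff w_def)
  have sw: "summable w" and PS: "P * S = 1"
    using qseries[OF q x(1) x1, of n] unfolding weq[symmetric] P_def S_def by auto
  have wnn: "w k \<ge> 0" for k using ab_nonneg[OF q(1)] x by (simp add: w_def)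
  have S0: "S \<ge> 0" unfolding S_def using sw wnn by (intro suminf_nonneg) auto
  have P0: "P \<ge> 0" using PS S0 by (metis less_eq_real_def mult_eq_0_iff mult_less_0_iff zero_less_one not_le)
  have tr: "0 \<le> t k \<and> t k \<le> 1" for k unfolding t_def by (rule t_range[OF q(1) n])
  have tS: "t (Suc k) \<le> t k + 1 / Q" for k unfolding t_def Q_def by (rule t_step[OF q n])
  have t0: "t 0 = 0" by (simp add: t_def)
  have wshift: "w (Suc k) * t (Suc k) = x * w k" for k
  proof -
    have "w (Suc k) * t (Suc k) = x * x ^ k * (ab q n (Suc k) * (qint q (Suc k) / qint q (Suc k + n)))"
      unfolding w_def t_def by (simp only: power_Suc mult_ac times_divide_eq_right)
    also have "\<dots> = x * x ^ k * ab q n k" unfolding ab_shift[OF q(1)] ..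
    finally show ?thesis by (simp add: w_def mult_ac)
  qed
  have s1: "summable (\<lambda>k. w k * t k)"
  proof (rule summable_cmp[OF sw, of _ 1])
    fix k
    have "w k * t k \<le> w k * 1" using wnn[of k] tr[of k] by (intro mult_left_mono) auto
    moreover have "w k * t k \<ge> 0" using wnn[of k] tr[of k] by simp
    ultimately show "\<bar>w k * t k\<bar> \<le> 1 * w k" by simp
  qed
  have m1: "(\<Sum>k. w k * t k) = x * S"
  proof -
    have "(\<Sum>k. w (Suc k) * t (Suc k)) = (\<Sum>k. w k * t k) - w 0 * t 0"
      by (rule suminf_split_head[OF s1])
    moreover have "(\<Sum>k. w (Suc k) * t (Suc k)) = x * S"
      unfolding wshift S_def by (rule suminf_mult[OF sw])
    ultimately show ?thesis using t0 by simp
  qed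
  have s2: "summable (\<lambda>k. w k * t k ^ 2)"
  proof (rule summable_cmp[OF sw, of _ 1])
    fix k
    have "t k ^ 2 \<le> 1" using tr[of k] by (simp add: power_le_one)
    then show "\<bar>w k * t k ^ 2\<bar> \<le> 1 * w k" using wnn[of k] by (intro wle2) auto
  qed
  have m2: "(\<Sum>k. w k * t k ^ 2) \<le> x * (x * S) + x * S / Q"
  proof -
    have "(\<Sum>k. w (Suc k) * t (Suc k) ^ 2) = (\<Sum>k. w k * t k ^ 2) - w 0 * t 0 ^ 2"
      by (rule suminf_split_head[OF s2])
    then have e: "(\<Sum>k. w k * t k ^ 2) = (\<Sum>k. w (Suc k) * t (Suc k) ^ 2)" using t0 by simp
    have le: "w (Suc k) * t (Suc k) ^ 2 \<le> x * (w k * t k) + (x / Q) * w k" for k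
    proof -
      have "w (Suc k) * t (Suc k) ^ 2 = x * w k * t (Suc k)" using wshift[of k] by (simp add: power2_eq_square)
      also have "\<dots> \<le> x * w k * (t k + 1 / Q)" using tS[of k] x wnn[of k] by (intro mult_left_mono) auto
      also have "\<dots> = x * (w k * t k) + (x / Q) * w k" by (simp add: algebra_simps)
      finally show ?thesis .
    qed
    have sR: "summable (\<lambda>k. x * (w k * t k) + (x / Q) * w k)"
      by (intro summable_add summable_mult s1 sw)
    have "(\<Sum>k. w (Suc k) * t (Suc k) ^ 2) \<le> (\<Sum>k. x * (w k * t k) + (x / Q) * w k)"
      by (rule suminf_le[OF le _ sR]) (use summable_Suc_iff[of "\<lambda>k. w k * t k ^ 2"] s2 in simp)
    also have "\<dots> = x * (x * S) + x * S / Q"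
      using suminf_add[OF summable_mult[OF s1] summable_mult[OF sw], of x "x / Q"]
            suminf_mult[OF s1, of x] suminf_mult[OF sw, of "x / Q"] m1
      by (simp add: S_def)
    finally show ?thesis using e by simp
  qed
  have sv: "summable (\<lambda>k. w k * (t k - x) ^ 2)"
  proof (rule summable_cmp[OF sw, of _ 1])
    fix k
    have "\<bar>t k - x\<bar> \<le> 1" using tr[of k] x by auto
    then have "(t k - x) ^ 2 \<le> 1" by (metis abs_le_square_iff power_one abs_one)
    then show "\<bar>w k * (t k - x) ^ 2\<bar> \<le> 1 * w k" using wnn[of k] by (intro wle2) auto
  qed
  have V: "(\<Sum>k. w k * (t k - x) ^ 2) \<le> x * S / Q"
  proof -
    have "(\<lambda>k. w k * (t k - x) ^ 2) = (\<lambda>k. w k * t k ^ 2 - (2 * x) * (w k * t k) + x ^ 2 * w k)"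
      by (simp add: fun_eq_iff power2_eq_square algebra_simps)
    then have "(\<Sum>k. w k * (t k - x) ^ 2) = (\<Sum>k. w k * t k ^ 2) - (2 * x) * (\<Sum>k. w k * t k) + x ^ 2 * S"
      using suminf_add[OF summable_diff[OF s2 summable_mult[OF s1]] summable_mult[OF sw]]
            suminf_diff[OF s2 summable_mult[OF s1]] suminf_mult[OF s1] suminf_mult[OF sw]
      by (simp add: S_def)
    then show ?thesis using m1 m2 by (simp add: power2_eq_square algebra_simps)
  qed
  have tin: "t k \<in> {0..1}" for k using tr[of k] by simp
  have xin: "x \<in> {0..1}" using x by simp
  have hdiff: "\<bar>h (t k) - h x\<bar> \<le> \<epsilon> + C * (t k - x) ^ 2" for k using hb[OF tin xin] .
  have sh: "summable (\<lambda>k. w k * h (t k))"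
  proof (rule summable_cmp[OF sw, of _ "\<bar>h x\<bar> + \<epsilon> + C"])
    fix k
    have "(t k - x) ^ 2 \<le> 1"
    proof -
      have "\<bar>t k - x\<bar> \<le> 1" using tr[of k] x by auto
      then show ?thesis by (metis abs_le_square_iff power_one abs_one)
    qed
    then have "C * (t k - x) ^ 2 \<le> C * 1" using C by (intro mult_left_mono) auto
    then have "\<bar>h (t k)\<bar> \<le> \<bar>h x\<bar> + \<epsilon> + C" using hdiff[of k] by linarith
    then show "\<bar>w k * h (t k)\<bar> \<le> (\<bar>h x\<bar> + \<epsilon> + C) * w k"
      using wnn[of k] by (intro wle2) auto
  qed
  have MK: "MKZ n q h x = P * (\<Sum>k. w k * h (t k))"
    using False unfolding MKZ_def P_def w_def t_def qbinom_ab by simp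
  have "MKZ n q h x - h x = P * (\<Sum>k. w k * (h (t k) - h x))"
  proof -
    have "(\<Sum>k. w k * (h (t k) - h x)) = (\<Sum>k. w k * h (t k)) - h x * S"
      using suminf_diff[OF sh summable_mult2[OF sw, of "h x"]] suminf_mult2[OF sw, of "h x"]
      by (simp add: S_def algebra_simps)
    then have "P * (\<Sum>k. w k * (h (t k) - h x)) = P * (\<Sum>k. w k * h (t k)) - P * (h x * S)"
      by (simp only: right_diff_distrib)
    moreover have "P * (h x * S) = h x" using PS by (metis mult.left_commute mult_1_right)
    ultimately show ?thesis unfolding MK by simp
  qed
  also have "\<bar>\<dots>\<bar> \<le> P * (\<Sum>k. w k * (\<epsilon> + C * (t k - x) ^ 2))"
  proof -
    have sd: "summable (\<lambda>k. w k * (h (t k) - h x))"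
      using summable_diff[OF sh summable_mult2[OF sw, of "h x"]] by (simp add: algebra_simps)
    have sb: "summable (\<lambda>k. w k * (\<epsilon> + C * (t k - x) ^ 2))"
      using summable_add[OF summable_mult2[OF sw, of \<epsilon>] summable_mult[OF sv, of C]]
      by (simp add: algebra_simps)
    have "\<bar>\<Sum>k. w k * (h (t k) - h x)\<bar> \<le> (\<Sum>k. w k * (\<epsilon> + C * (t k - x) ^ 2))"
    proof -
      have le: "\<bar>w k * (h (t k) - h x)\<bar> \<le> w k * (\<epsilon> + C * (t k - x) ^ 2)" for k
        using hdiff[of k] wnn[of k] by (simp add: abs_mult mult_left_mono)
      have sa: "summable (\<lambda>k. \<bar>w k * (h (t k) - h x)\<bar>)"
        by (rule summable_rabs_comparison_test[OF _ sb]) (use le in blast)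
      have "\<bar>\<Sum>k. w k * (h (t k) - h x)\<bar> \<le> (\<Sum>k. \<bar>w k * (h (t k) - h x)\<bar>)"
        by (rule summable_rabs[OF sa])
      also have "\<dots> \<le> (\<Sum>k. w k * (\<epsilon> + C * (t k - x) ^ 2))"
        by (rule suminf_le[OF le sa sb])
      finally show ?thesis .
    qed
    then show ?thesis using P0 by (simp add: abs_mult mult_left_mono)
  qed
  also have "(\<Sum>k. w k * (\<epsilon> + C * (t k - x) ^ 2)) = \<epsilon> * S + C * (\<Sum>k. w k * (t k - x) ^ 2)"
    using suminf_add[OF summable_mult2[OF sw, of \<epsilon>] summable_mult[OF sv, of C]]
          suminf_mult2[OF sw, of \<epsilon>] suminf_mult[OF sv, of C]
    by (simp add: S_def algebra_simps)
  also have "P * (\<epsilon> * S + C * (\<Sum>k. w k * (t k - x) ^ 2)) \<le> P * (\<epsilon> * S + C * (x * S / Q))"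
    using V C P0 by (intro mult_left_mono add_left_mono) auto
  also have "\<dots> = \<epsilon> * (P * S) + C * x * (P * S) / Q"
    by (simp add: algebra_simps)
  also have "\<dots> = \<epsilon> + C * x / Q"
    unfolding PS by simp
  also have "\<dots> \<le> \<epsilon> + C / Q"
    using C Q x by (simp add: divide_right_mono mult_left_le)
  finally show ?thesis by (simp add: Q_def)
qed


lemma uc_quadratic:
  fixes h :: "real \<Rightarrow> real"
  assumes h: "continuous_on {0..1} h" and \<epsilon>: "\<epsilon> > 0"
  shows "\<exists>C\<ge>0. \<forall>s\<in>{0..1}. \<forall>y\<in>{0..1}. \<bar>h s - h y\<bar> \<le> \<epsilon> + C * (s - y) ^ 2"
proof -
  have "bounded (h ` {0..1})" by (rule compact_imp_bounded[OF compact_continuous_image[OF h compact_Icc]])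
  then obtain Mb where Mb0': "\<forall>x\<in>{0..1}. \<bar>h x\<bar> \<le> Mb" by (auto simp: bounded_iff)
  then have Mb: "\<And>x. x \<in> {0..1} \<Longrightarrow> \<bar>h x\<bar> \<le> Mb" by blast
  have Mb0: "Mb \<ge> 0" using Mb[of 0] by simp
  have "uniformly_continuous_on {0..1} h" by (rule compact_uniformly_continuous[OF h compact_Icc])
  then obtain d where d: "d > 0" and dd: "\<And>x x'. x \<in> {0..1} \<Longrightarrow> x' \<in> {0..1} \<Longrightarrow> dist x' x < d \<Longrightarrow> dist (h x') (h x) < \<epsilon>"
    unfolding uniformly_continuous_on_def using \<epsilon> by metis
  define C where "C = 2 * Mb / d ^ 2"
  have C0: "C \<ge> 0" using Mb0 d by (simp add: C_def)
  have "\<bar>h s - h y\<bar> \<le> \<epsilon> + C * (s - y) ^ 2" if s: "s \<in> {0..1}" and y: "y \<in> {0..1}" for s y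
  proof (cases "\<bar>s - y\<bar> < d")
    case True
    then have "\<bar>h s - h y\<bar> < \<epsilon>" using dd[OF y s] by (simp add: dist_real_def)
    moreover have "C * (s - y) ^ 2 \<ge> 0" using C0 by simp
    ultimately show ?thesis by linarith
  next
    case False
    then have "d ^ 2 \<le> (s - y) ^ 2" using d by (metis abs_le_square_iff abs_of_pos not_less)
    then have "C * d ^ 2 \<le> C * (s - y) ^ 2" using C0 by (intro mult_left_mono) auto
    moreover have "C * d ^ 2 = 2 * Mb" using d by (simp add: C_def)
    moreover have "\<bar>h s - h y\<bar> \<le> 2 * Mb" using Mb[OF s] Mb[OF y] by linarith
    ultimately show ?thesis using \<epsilon> by linarith
  qed
  then show ?thesis using C0 by blast
qed

lemma qint_big:
  fixes q :: "nat \<Rightarrow> real"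
  assumes q_range: "\<And>n. 0 < q n \<and> q n \<le> 1" and q_lim: "q \<longlonglongrightarrow> 1"
  shows "eventually (\<lambda>n. B \<le> qint (q n) n) sequentially"
proof -
  define K where "K = nat \<lceil>2 * B\<rceil> + 1"
  have K1: "K \<ge> 1" by (simp add: K_def)
  have KB: "2 * B \<le> real K" unfolding K_def by linarith
  have "(\<lambda>n. q n ^ K) \<longlonglongrightarrow> 1 ^ K" by (rule tendsto_power[OF q_lim])
  then have ev1: "eventually (\<lambda>n. q n ^ K > 1/2) sequentially"
    by (rule order_tendstoD) simp
  have ev2: "eventually (\<lambda>n. n \<ge> K) sequentially" by (rule eventually_ge_at_top)
  show ?thesis
    using ev1 ev2
  proof eventually_elim
    case (elim n)
    have qn: "0 < q n" "q n \<le> 1" using q_range[of n] by auto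
    have "(\<Sum>j<K. q n ^ K) \<le> (\<Sum>j<K. q n ^ j)"
      by (rule sum_mono) (use qn in \<open>auto intro: power_decreasing\<close>)
    also have "\<dots> \<le> (\<Sum>j<n. q n ^ j)"
      by (rule sum_mono2) (use elim qn in auto)
    finally have "real K * q n ^ K \<le> qint (q n) n" by (simp add: qint_sum)
    moreover have "real K * (1/2) \<le> real K * q n ^ K" using elim by (intro mult_left_mono) auto
    ultimately show ?case using KB by linarith
  qed
qed

lemma mkz_conv:
  fixes q :: "nat \<Rightarrow> real" and h :: "real \<Rightarrow> real"
  assumes q_range: "\<And>n. 0 < q n \<and> q n \<le> 1" and q_lim: "q \<longlonglongrightarrow> 1"
    and h: "continuous_on {0..1} h" and \<eta>: "\<eta> > 0"
  shows "eventually (\<lambda>n. \<forall>x\<in>{0..1}. \<bar>MKZ n (q n) h x - h x\<bar> \<le> \<eta>) sequentially"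
proof -
  obtain C where C: "C \<ge> 0" "\<And>s y. s\<in>{0..1} \<Longrightarrow> y\<in>{0..1} \<Longrightarrow> \<bar>h s - h y\<bar> \<le> \<eta>/2 + C * (s - y) ^ 2"
    using uc_quadratic[OF h, of "\<eta>/2"] \<eta> by auto
  have ev1: "eventually (\<lambda>n. 2 * C / \<eta> + 1 \<le> qint (q n) n) sequentially"
    by (rule qint_big[OF q_range q_lim])
  have ev2: "eventually (\<lambda>n. n \<ge> 1) sequentially" by (rule eventually_ge_at_top)
  show ?thesis
    using ev1 ev2
  proof eventually_elim
    case (elim n)
    have Qp: "qint (q n) n > 0" using elim C \<eta> by (smt (verit) divide_nonneg_pos)
    have "C / qint (q n) n \<le> \<eta> / 2"
    proof -
      have "2 * C / \<eta> \<le> qint (q n) n" using elim by linarith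
      then have "2 * C \<le> qint (q n) n * \<eta>" using \<eta> by (simp add: divide_le_eq)
      then show ?thesis using Qp \<eta> by (simp add: divide_le_eq mult.commute)
    qed
    moreover have "\<bar>MKZ n (q n) h x - h x\<bar> \<le> \<eta>/2 + C / qint (q n) n" if "x \<in> {0..1}" for x
      by (rule mkz_est) (use q_range[of n] elim that C \<eta> in auto)
    ultimately show ?case by (smt (verit) field_sum_of_halves)
  qed
qed

lemma mkz_at0:
  assumes q: "0 < q"
  shows "MKZ n q h 0 = h 0"
proof -
  have "(\<lambda>k. qbinom q (n + k) k * 0 ^ k * h (qint q k / qint q (k + n))) = (\<lambda>k. if k = 0 then h 0 else 0)"
    using ab_n0[OF q, of n] by (auto simp: fun_eq_iff qbinom_ab)
  moreover have "(\<lambda>k. if k = 0 then h 0 else (0::real)) sums h 0"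
    using sums_single[of 0 "\<lambda>_. h 0"] by simp
  ultimately show ?thesis by (simp add: MKZ_def sums_iff)
qed


definition idx :: "nat \<Rightarrow> (nat \<Rightarrow> real) \<Rightarrow> real \<Rightarrow> nat" where
  "idx N xs s = (LEAST i. 1 \<le> i \<and> s \<le> xs (Suc i))"

definition inv_u :: "nat \<Rightarrow> (nat \<Rightarrow> real) \<Rightarrow> real \<Rightarrow> real" where
  "inv_u N xs s = (s - xs (idx N xs s)) / (xs (Suc (idx N xs s)) - xs (idx N xs s))"

locale part =
  fixes N :: nat and xs :: "nat \<Rightarrow> real"
  assumes N: "N \<ge> 2" and xs0: "xs 1 = 0" and xsN: "xs N = 1"
    and xs_mono: "\<And>i. 1 \<le> i \<Longrightarrow> i < N \<Longrightarrow> xs i < xs (Suc i)"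
begin

lemma xs_strict:
  shows "1 \<le> i \<Longrightarrow> i < j \<Longrightarrow> j \<le> N \<Longrightarrow> xs i < xs j"
proof (induction j)
  case 0 then show ?case by simp
next
  case (Suc j)
  show ?case
  proof (cases "i = j")
    case True then show ?thesis using Suc xs_mono by simp
  next
    case False
    then have "xs i < xs j" using Suc by simp
    also have "xs j < xs (Suc j)" using Suc False xs_mono by simp
    finally show ?thesis .
  qed
qed

lemma xs_le:
  shows "1 \<le> i \<Longrightarrow> i \<le> j \<Longrightarrow> j \<le> N \<Longrightarrow> xs i \<le> xs j"
  using xs_strict[of i j] by (cases "i = j") auto

lemma idx_props:
  assumes s: "s \<in> {0..1}"
  shows "1 \<le> idx N xs s \<and> idx N xs s \<le> N - 1 \<and> s \<le> xs (Suc (idx N xs s)) \<and> xs (idx N xs s) \<le> s"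
proof -
  let ?P = "\<lambda>i. 1 \<le> i \<and> s \<le> xs (Suc i)"
  have PN: "?P (N - 1)" using N s xsN by (simp add: Suc_diff_Suc numeral_2_eq_2)
  have Pj: "?P (idx N xs s)" unfolding idx_def by (rule LeastI[of ?P, OF PN])
  have jle: "idx N xs s \<le> N - 1" unfolding idx_def by (rule Least_le[of ?P, OF PN])
  have "xs (idx N xs s) \<le> s"
  proof (cases "idx N xs s = 1")
    case True then show ?thesis using xs0 s by simp
  next
    case False
    then have "idx N xs s - 1 < idx N xs s" "1 \<le> idx N xs s - 1" using Pj by auto
    then have "\<not> ?P (idx N xs s - 1)" using not_less_Least[of "idx N xs s - 1" ?P] unfolding idx_def by blast
    then have "\<not> s \<le> xs (Suc (idx N xs s - 1))" using \<open>1 \<le> idx N xs s - 1\<close> by blast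
    moreover have "Suc (idx N xs s - 1) = idx N xs s" using Pj by simp
    ultimately show ?thesis by simp
  qed
  then show ?thesis using Pj jle by blast
qed

lemma gap_pos: "1 \<le> i \<Longrightarrow> i \<le> N - 1 \<Longrightarrow> xs (Suc i) - xs i > 0"
  using xs_mono[of i] by simp

lemma inv_props:
  assumes s: "s \<in> {0..1}"
  shows "inv_u N xs s \<in> {0..1} \<and> affu xs (idx N xs s) (inv_u N xs s) = s \<and> idx N xs s \<in> {1..N-1}"
proof -
  define j where "j = idx N xs s"
  have p: "1 \<le> j" "j \<le> N - 1" "s \<le> xs (Suc j)" "xs j \<le> s" using idx_props[OF s] by (auto simp: j_def)
  have d: "xs (Suc j) - xs j > 0" using gap_pos p by simp
  have "inv_u N xs s = (s - xs j) / (xs (Suc j) - xs j)" by (simp add: inv_u_def j_def)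
  moreover have "0 \<le> (s - xs j) / (xs (Suc j) - xs j)" using d p by simp
  moreover have "(s - xs j) / (xs (Suc j) - xs j) \<le> 1" using d p by (simp add: divide_le_eq_1)
  moreover have "affu xs j ((s - xs j) / (xs (Suc j) - xs j)) = s" using d by (simp add: affu_def)
  ultimately show ?thesis using p by (simp add: j_def)
qed

lemma affu_in:
  assumes i: "i \<in> {1..N-1}" and t: "t \<in> {0..1}"
  shows "affu xs i t \<in> {xs i..xs (Suc i)} \<and> affu xs i t \<in> {0..1}"
proof -
  have d: "xs (Suc i) - xs i > 0" using gap_pos i by simp
  have a: "xs i \<le> affu xs i t" using d t by (simp add: affu_def)
  have b: "affu xs i t \<le> xs (Suc i)"
  proof -
    have "(xs (Suc i) - xs i) * t \<le> (xs (Suc i) - xs i) * 1" using d t by (intro mult_left_mono) auto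
    then show ?thesis by (simp add: affu_def)
  qed
  have "xs 1 \<le> xs i" using i by (intro xs_le) auto
  moreover have "xs (Suc i) \<le> xs N" using i N by (intro xs_le) auto
  ultimately show ?thesis using a b xs0 xsN by auto
qed

lemma key:
  assumes i: "i \<in> {1..N-1}" and t: "t \<in> {0..1}"
  defines "s \<equiv> affu xs i t"
  shows "(idx N xs s = i \<and> inv_u N xs s = t) \<or>
         (t = 0 \<and> 2 \<le> i \<and> idx N xs s = i - 1 \<and> inv_u N xs s = 1)"
proof -
  have sin: "s \<in> {xs i..xs (Suc i)}" "s \<in> {0..1}" using affu_in[OF i t] by (auto simp: s_def)
  define j where "j = idx N xs s"
  have p: "1 \<le> j" "j \<le> N - 1" "s \<le> xs (Suc j)" "xs j \<le> s" using idx_props[OF sin(2)] by (auto simp: j_def)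
  have ji: "j \<le> i" unfolding j_def idx_def by (rule Least_le) (use i sin in auto)
  have d: "xs (Suc i) - xs i > 0" using gap_pos i by simp
  show ?thesis
  proof (cases "j = i")
    case True
    have "inv_u N xs s = (s - xs i) / (xs (Suc i) - xs i)" using True by (simp add: inv_u_def j_def)
    also have "\<dots> = t" using d by (simp add: s_def affu_def)
    finally show ?thesis using True by (simp add: j_def)
  next
    case False
    then have ji': "j < i" using ji by simp
    have "xs (Suc j) \<le> xs i" using ji' p i by (intro xs_le) auto
    then have seq: "s = xs i" "xs (Suc j) = xs i" using p sin by auto
    have "Suc j = i"
    proof (rule ccontr)
      assume "Suc j \<noteq> i"
      then have "xs (Suc j) < xs i" using ji' p i by (intro xs_strict) auto
      then show False using seq by simp
    qed
    have t0: "t = 0" using seq(1) d by (simp add: s_def affu_def)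
    have dj: "xs (Suc j) - xs j > 0" using gap_pos p by simp
    have "inv_u N xs s = (s - xs j) / (xs (Suc j) - xs j)" by (simp add: inv_u_def j_def)
    also have "\<dots> = 1" using seq dj by simp
    finally show ?thesis using t0 \<open>Suc j = i\<close> p by (auto simp: j_def)
  qed
qed

end


context part
begin

lemma affu_0: "affu xs 1 0 = 0"
proof -
  have "affu xs 1 0 = xs 1" by (simp add: affu_def)
  then show ?thesis using xs0 by simp
qed
lemma affu_1: "affu xs (N - 1) 1 = 1"
proof -
  have "Suc (N - 1) = N" using N by simp
  then show ?thesis by (simp add: affu_def xsN)
qed
lemma one_in: "1 \<in> {1..N-1}" "N - 1 \<in> {1..N-1}" using N by auto

lemma fractal_main:
  fixes alpha :: "nat \<Rightarrow> real \<Rightarrow> real" and h M :: "real \<Rightarrow> real" and c R Hb :: real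
  assumes c: "0 \<le> c" "c < 1"
    and ac: "\<And>i t. i \<in> {1..N-1} \<Longrightarrow> t \<in> {0..1} \<Longrightarrow> \<bar>alpha i t\<bar> \<le> c"
    and Hb: "\<And>t. t \<in> {0..1} \<Longrightarrow> \<bar>h t\<bar> \<le> Hb"
    and M0: "M 0 = h 0" and M1: "M 1 = h 1"
    and R: "\<And>t. t \<in> {0..1} \<Longrightarrow> \<bar>h t - M t\<bar> \<le> R"
  shows "\<forall>t\<in>{0..1}. \<bar>(THE G. bounded (G ` {0..1}) \<and> (\<forall>t. t \<notin> {0..1} \<longrightarrow> G t = 0) \<and>
        (\<forall>i\<in>{1..N-1}. \<forall>t\<in>{0..1}. G (affu xs i t) = h (affu xs i t) + alpha i t * (G t - M t))) t - h t\<bar>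
       \<le> c * R / (1 - c)"
proof -
  define Pr where "Pr G \<longleftrightarrow> bounded (G ` {0..1}) \<and> (\<forall>t. t \<notin> {0..1} \<longrightarrow> G t = 0) \<and>
        (\<forall>i\<in>{1..N-1}. \<forall>t\<in>{0..1}. G (affu xs i t) = h (affu xs i t) + alpha i t * (G t - M t))" for G
  define r where "r t = h t - M t" for t
  define B where "B = c * R / (1 - c)"
  have r0: "r 0 = 0" "r 1 = 0" using M0 M1 by (simp_all add: r_def)
  have R0: "R \<ge> 0" using R[of 0] by simp
  have rR: "\<bar>r t\<bar> \<le> R" if "t \<in> {0..1}" for t using R[OF that] by (simp add: r_def)
  have B0: "B \<ge> 0" using c R0 by (simp add: B_def)
  have Bfix: "c * (B + R) = B" using c by (simp add: B_def field_simps)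
  define T where "T E s = (if s \<in> {0..1} then alpha (idx N xs s) (inv_u N xs s) * (E (inv_u N xs s) + r (inv_u N xs s)) else 0)"
    for E :: "real \<Rightarrow> real" and s
  have T_eq: "T E (affu xs i t) = alpha i t * (E t + r t)"
    if E: "E 0 = 0" "E 1 = 0" and i: "i \<in> {1..N-1}" and t: "t \<in> {0..1}" for E i t
  proof -
    have sin: "affu xs i t \<in> {0..1}" using affu_in[OF i t] by simp
    from key[OF i t] show ?thesis
    proof
      assume "idx N xs (affu xs i t) = i \<and> inv_u N xs (affu xs i t) = t"
      then show ?thesis using sin by (simp add: T_def)
    next
      assume A: "t = 0 \<and> 2 \<le> i \<and> idx N xs (affu xs i t) = i - 1 \<and> inv_u N xs (affu xs i t) = 1"
      then have iv: "inv_u N xs (affu xs i t) = 1" by blast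
      have "T E (affu xs i t) = 0" using sin E r0 unfolding T_def iv by simp
      moreover have "alpha i t * (E t + r t) = 0" using A E r0 by simp
      ultimately show ?thesis by simp
    qed
  qed
  have T01: "T E 0 = 0 \<and> T E 1 = 0" if E: "E 0 = 0" "E 1 = 0" for E
    using T_eq[OF E one_in(1), of 0] T_eq[OF E one_in(2), of 1] affu_0 affu_1 E r0 by simp
  have Tsub: "\<bar>T E s - T F s\<bar> \<le> c * \<bar>E (inv_u N xs s) - F (inv_u N xs s)\<bar>" if s: "s \<in> {0..1}" for E F s
  proof -
    have ip: "inv_u N xs s \<in> {0..1}" "idx N xs s \<in> {1..N-1}" using inv_props[OF s] by auto
    have "T E s - T F s = alpha (idx N xs s) (inv_u N xs s) * (E (inv_u N xs s) - F (inv_u N xs s))"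
      using s by (simp add: T_def algebra_simps)
    then show ?thesis using ac[OF ip(2) ip(1)] by (simp add: abs_mult mult_right_mono)
  qed
  have Tbd: "\<bar>T E s\<bar> \<le> c * (\<bar>E (inv_u N xs s)\<bar> + R)" if s: "s \<in> {0..1}" for E s
  proof -
    have ip: "inv_u N xs s \<in> {0..1}" "idx N xs s \<in> {1..N-1}" using inv_props[OF s] by auto
    have "\<bar>E (inv_u N xs s) + r (inv_u N xs s)\<bar> \<le> \<bar>E (inv_u N xs s)\<bar> + R"
      using rR[OF ip(1)] by linarith
    then show ?thesis using s ac[OF ip(2) ip(1)] c
      by (simp add: T_def abs_mult mult_mono)
  qed
  define Es where "Es k = (T ^^ k) (\<lambda>_. 0)" for k
  have EsSuc: "Es (Suc k) = T (Es k)" for k by (simp add: Es_def)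
  have E01: "Es k 0 = 0 \<and> Es k 1 = 0" for k
    by (induction k) (simp_all add: Es_def T01)
  have Ebd: "\<forall>s\<in>{0..1}. \<bar>Es k s\<bar> \<le> B" for k
  proof (induction k)
    case 0 then show ?case using B0 by (simp add: Es_def)
  next
    case (Suc k)
    show ?case
    proof
      fix s :: real assume s: "s \<in> {0..1}"
      have "inv_u N xs s \<in> {0..1}" using inv_props[OF s] by auto
      then have "\<bar>Es k (inv_u N xs s)\<bar> + R \<le> B + R" using Suc by simp
      then have "c * (\<bar>Es k (inv_u N xs s)\<bar> + R) \<le> c * (B + R)" using c by (intro mult_left_mono) auto
      then show "\<bar>Es (Suc k) s\<bar> \<le> B" using Tbd[OF s, of "Es k"] Bfix by (simp add: EsSuc)
    qed
  qed
  have Ediff: "\<forall>s\<in>{0..1}. \<bar>Es (Suc k) s - Es k s\<bar> \<le> c ^ k * (c * R)" for k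
  proof (induction k)
    case 0
    show ?case
    proof
      fix s :: real assume s: "s \<in> {0..1}"
      show "\<bar>Es (Suc 0) s - Es 0 s\<bar> \<le> c ^ 0 * (c * R)" using Tbd[OF s, of "\<lambda>_. 0"] by (simp add: Es_def)
    qed
  next
    case (Suc k)
    show ?case
    proof
      fix s :: real assume s: "s \<in> {0..1}"
      have "inv_u N xs s \<in> {0..1}" using inv_props[OF s] by auto
      then have "c * \<bar>Es (Suc k) (inv_u N xs s) - Es k (inv_u N xs s)\<bar> \<le> c * (c ^ k * (c * R))"
        using Suc c by (intro mult_left_mono) auto
      then show "\<bar>Es (Suc (Suc k)) s - Es (Suc k) s\<bar> \<le> c ^ Suc k * (c * R)"
        using Tsub[OF s, of "Es (Suc k)" "Es k"] unfolding EsSuc[of "Suc k"] EsSuc[of k] by simp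
    qed
  qed
  define E where "E s = (\<Sum>k. Es (Suc k) s - Es k s)" for s
  have Elim: "(\<lambda>k. Es k s) \<longlonglongrightarrow> E s" if s: "s \<in> {0..1}" for s
  proof -
    have "summable (\<lambda>k. c ^ k * (c * R))" using c by (intro summable_mult2 summable_geometric) simp
    then have sm: "summable (\<lambda>k. Es (Suc k) s - Es k s)"
      by (rule summable_comparison_test[rotated]) (use Ediff s in auto)
    have "(\<lambda>n. \<Sum>k<n. Es (Suc k) s - Es k s) \<longlonglongrightarrow> E s" unfolding E_def by (rule summable_LIMSEQ[OF sm])
    moreover have "(\<Sum>k<n. Es (Suc k) s - Es k s) = Es n s" for n
      using sum_lessThan_telescope[of "\<lambda>k. Es k s" n] by (simp add: Es_def)
    ultimately show ?thesis by simp
  qed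
  have Eeq: "E (affu xs i t) = alpha i t * (E t + r t)" if i: "i \<in> {1..N-1}" and t: "t \<in> {0..1}" for i t
  proof -
    have sin: "affu xs i t \<in> {0..1}" using affu_in[OF i t] by simp
    have "(\<lambda>k. Es (Suc k) (affu xs i t)) \<longlonglongrightarrow> E (affu xs i t)" using LIMSEQ_Suc[OF Elim[OF sin]] .
    moreover have "Es (Suc k) (affu xs i t) = alpha i t * (Es k t + r t)" for k
      unfolding EsSuc using T_eq[OF _ _ i t] E01 by blast
    ultimately have l1: "(\<lambda>k. alpha i t * (Es k t + r t)) \<longlonglongrightarrow> E (affu xs i t)" by simp
    have l2: "(\<lambda>k. alpha i t * (Es k t + r t)) \<longlonglongrightarrow> alpha i t * (E t + r t)"
      by (rule tendsto_mult[OF tendsto_const tendsto_add[OF Elim[OF t] tendsto_const]])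
    show ?thesis using LIMSEQ_unique[OF l1 l2] .
  qed
  have EB: "\<bar>E s\<bar> \<le> B" if s: "s \<in> {0..1}" for s
  proof -
    have "(\<lambda>k. \<bar>Es k s\<bar>) \<longlonglongrightarrow> \<bar>E s\<bar>" by (rule tendsto_rabs[OF Elim[OF s]])
    then show ?thesis by (rule LIMSEQ_le_const2) (use Ebd s in auto)
  qed
  define G where "G s = (if s \<in> {0..1} then h s + E s else 0)" for s
  have PrG: "Pr G"
    unfolding Pr_def
  proof (intro conjI)
    show "bounded (G ` {0..1})"
      unfolding bounded_iff
    proof (intro exI ballI)
      fix y assume "y \<in> G ` {0..1}"
      then obtain s where s: "s \<in> {0..1}" "y = G s" by auto
      then show "norm y \<le> Hb + B" using Hb[OF s(1)] EB[OF s(1)] by (simp add: G_def)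
    qed
    show "\<forall>t. t \<notin> {0..1} \<longrightarrow> G t = 0" by (simp add: G_def)
    show "\<forall>i\<in>{1..N-1}. \<forall>t\<in>{0..1}. G (affu xs i t) = h (affu xs i t) + alpha i t * (G t - M t)"
    proof (intro ballI)
      fix i :: nat and t :: real assume i: "i \<in> {1..N-1}" and t: "t \<in> {0..1}"
      have sin: "affu xs i t \<in> {0..1}" using affu_in[OF i t] by simp
      show "G (affu xs i t) = h (affu xs i t) + alpha i t * (G t - M t)"
        using sin t Eeq[OF i t] by (simp add: G_def r_def)
    qed
  qed
  have uniq: "G' = G" if P': "Pr G'" for G'
  proof -
    define D where "D s = G' s - G s" for s
    obtain B1 where B1: "\<forall>y\<in>G' ` {0..1}. norm y \<le> B1" using P' unfolding Pr_def bounded_iff by blast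
    obtain B2 where B2: "\<forall>y\<in>G ` {0..1}. norm y \<le> B2" using PrG unfolding Pr_def bounded_iff by blast
    have Dbd: "\<bar>D s\<bar> \<le> B1 + B2" if s: "s \<in> {0..1}" for s
      using B1 B2 s unfolding D_def by (smt (verit) image_eqI real_norm_def)
    have Drec: "D (affu xs i t) = alpha i t * D t" if i: "i \<in> {1..N-1}" and t: "t \<in> {0..1}" for i t
    proof -
      have "G' (affu xs i t) = h (affu xs i t) + alpha i t * (G' t - M t)" using P' i t unfolding Pr_def by blast
      moreover have "G (affu xs i t) = h (affu xs i t) + alpha i t * (G t - M t)" using PrG i t unfolding Pr_def by blast
      ultimately show ?thesis unfolding D_def by (simp add: algebra_simps)
    qed
    have Dk: "\<forall>s\<in>{0..1}. \<bar>D s\<bar> \<le> c ^ k * (B1 + B2)" for k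
    proof (induction k)
      case 0 then show ?case using Dbd by simp
    next
      case (Suc k)
      show ?case
      proof
        fix s :: real assume s: "s \<in> {0..1}"
        have ip: "inv_u N xs s \<in> {0..1}" "affu xs (idx N xs s) (inv_u N xs s) = s" "idx N xs s \<in> {1..N-1}"
          using inv_props[OF s] by auto
        have "D s = alpha (idx N xs s) (inv_u N xs s) * D (inv_u N xs s)"
          using Drec[OF ip(3) ip(1)] ip(2) by simp
        then have "\<bar>D s\<bar> \<le> c * \<bar>D (inv_u N xs s)\<bar>"
          using ac[OF ip(3) ip(1)] by (simp add: abs_mult mult_right_mono)
        also have "\<dots> \<le> c * (c ^ k * (B1 + B2))" using Suc ip(1) c by (intro mult_left_mono) auto
        finally show "\<bar>D s\<bar> \<le> c ^ Suc k * (B1 + B2)" by simp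
      qed
    qed
    have "D s = 0" if s: "s \<in> {0..1}" for s
    proof -
      have "(\<lambda>k. c ^ k * (B1 + B2)) \<longlonglongrightarrow> 0 * (B1 + B2)"
        by (rule tendsto_mult[OF LIMSEQ_power_zero tendsto_const]) (use c in simp)
      then have "\<bar>D s\<bar> \<le> 0" by (intro LIMSEQ_le_const[of _ 0]) (use Dk s in auto)
      then show ?thesis by simp
    qed
    then show ?thesis using P' unfolding Pr_def D_def fun_eq_iff by (auto simp: G_def)
  qed
  have "(THE G. Pr G) = G" by (rule the_equality[where P=Pr, OF PrG uniq])
  then have TG: "(THE G. bounded (G ` {0..1}) \<and> (\<forall>t. t \<notin> {0..1} \<longrightarrow> G t = 0) \<and>
        (\<forall>i\<in>{1..N-1}. \<forall>t\<in>{0..1}. G (affu xs i t) = h (affu xs i t) + alpha i t * (G t - M t))) = G"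
    unfolding Pr_def .
  show ?thesis unfolding TG using EB by (simp add: G_def B_def)
qed

end


lemma fractal_conv:
  fixes N :: nat and xs :: "nat \<Rightarrow> real" and q :: "nat \<Rightarrow> real"
    and alpha :: "nat \<Rightarrow> real \<Rightarrow> real" and c l \<eta> :: real
  assumes P: "part N xs"
    and q_range: "\<And>n. 0 < q n \<and> q n \<le> 1" and q_lim: "q \<longlonglongrightarrow> 1"
    and c: "0 \<le> c" "c < 1" and ac: "\<And>i t. i \<in> {1..N-1} \<Longrightarrow> t \<in> {0..1} \<Longrightarrow> \<bar>alpha i t\<bar> \<le> c"
    and l: "l > 0" and \<eta>: "\<eta> > 0"
  shows "eventually (\<lambda>n. \<forall>t\<in>{0..1}. \<bar>fractal N xs alpha n (q n) (\<lambda>s. s powr l) t - t powr l\<bar> \<le> \<eta>) sequentially"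
proof -
  define h where "h s = s powr l" for s :: real
  have hc: "continuous_on {0..1} h"
    unfolding h_def by (rule continuous_on_powr') (use l in \<open>auto intro: continuous_intros\<close>)
  have Hb: "\<bar>h t\<bar> \<le> 1" if "t \<in> {0..1}" for t
    using that l unfolding h_def by (auto intro!: powr_le1)
  define R where "R = \<eta> * (1 - c)"
  have R: "R > 0" using \<eta> c by (simp add: R_def)
  have ev: "eventually (\<lambda>n. \<forall>x\<in>{0..1}. \<bar>MKZ n (q n) h x - h x\<bar> \<le> R) sequentially"
    by (rule mkz_conv[OF q_range q_lim hc R])
  show ?thesis
    using ev
  proof eventually_elim
    case (elim n)
    have "\<forall>t\<in>{0..1}. \<bar>fractal N xs alpha n (q n) h t - h t\<bar> \<le> c * R / (1 - c)"
      unfolding fractal_def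
    proof (rule part.fractal_main[OF P c ac])
      show "\<bar>h t\<bar> \<le> 1" if "t \<in> {0..1}" for t using Hb[OF that] .
      show "MKZ n (q n) h 0 = h 0" using mkz_at0 q_range by blast
      show "MKZ n (q n) h 1 = h 1" by (simp add: MKZ_def)
      show "\<bar>h t - MKZ n (q n) h t\<bar> \<le> R" if "t \<in> {0..1}" for t
        using elim that by (simp add: abs_minus_commute)
    qed auto
    moreover have "c * R / (1 - c) \<le> \<eta>"
    proof -
      have "c * R / (1 - c) = c * \<eta>" using c by (simp add: R_def)
      also have "\<dots> \<le> 1 * \<eta>" using c \<eta> by (intro mult_right_mono) auto
      finally show ?thesis by simp
    qed
    ultimately show ?case unfolding h_def by fastforce
  qed
qed


theorem theorem5p2:
  fixes N :: nat and xs :: "nat \<Rightarrow> real" and q :: "nat \<Rightarrow> real"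
    and alpha :: "nat \<Rightarrow> real \<Rightarrow> real" and lam :: "nat \<Rightarrow> real"
  assumes N: "N \<ge> 2"
    and xs0: "xs 1 = 0" and xsN: "xs N = 1"
    and xs_mono: "\<And>i. 1 \<le> i \<Longrightarrow> i < N \<Longrightarrow> xs i < xs (Suc i)"
    and q_range: "\<And>n. 0 < q n \<and> q n \<le> 1"
    and q_lim: "q \<longlonglongrightarrow> 1"
    and alpha_bd: "\<And>i. i \<in> {1..N-1} \<Longrightarrow> \<exists>c<1. \<forall>t\<in>{0..1}. \<bar>alpha i t\<bar> \<le> c"
    and lam_distinct: "inj_on lam {1..}"
    and lam_pos: "\<And>i. i \<ge> 1 \<Longrightarrow> lam i > 0"
    and lam_inf: "\<exists>\<delta>>0. \<forall>i\<ge>1. lam i \<ge> \<delta>"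
    and lam_div: "\<not> summable (\<lambda>i. 1 / lam (Suc i))"
  shows "\<forall>f. continuous_on {0..1} f \<longrightarrow> (\<forall>\<epsilon>>0. \<exists>n\<ge>1. \<exists>m\<ge>1. \<exists>c :: nat \<Rightarrow> real.
           \<forall>t\<in>{0..1}. \<bar>f t - (c 0 + (\<Sum>j=1..m.
              c j * fractal N xs alpha n (q n) (\<lambda>s. s powr lam j) t))\<bar> < \<epsilon>)"
proof (intro allI impI)
  fix f :: "real \<Rightarrow> real" and \<epsilon> :: real
  assume f: "continuous_on {0..1} f" and \<epsilon>: "\<epsilon> > 0"
  have P: "part N xs" by (unfold_locales) (use N xs0 xsN xs_mono in auto)
  obtain cf where cf: "\<And>i. i \<in> {1..N-1} \<Longrightarrow> cf i < 1 \<and> (\<forall>t\<in>{0..1}. \<bar>alpha i t\<bar> \<le> cf i)"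
    using bchoice[of "{1..N-1}" "\<lambda>i c. c < 1 \<and> (\<forall>t\<in>{0..1}. \<bar>alpha i t\<bar> \<le> c)"] alpha_bd by blast
  define c where "c = Max (insert 0 (cf ` {1..N-1}))"
  have c0: "0 \<le> c" unfolding c_def by simp
  have c1: "c < 1" unfolding c_def using cf by (simp add: Max_less_iff)
  have ac: "\<bar>alpha i t\<bar> \<le> c" if "i \<in> {1..N-1}" "t \<in> {0..1}" for i t
  proof -
    have "cf i \<le> c" unfolding c_def using that by (intro Max_ge) auto
    then show ?thesis using cf[OF that(1)] that(2) by fastforce
  qed
  have "apx lam f" by (rule muntz_dense[OF lam_distinct lam_pos lam_inf lam_div f])
  then obtain m0 cc where mc: "\<forall>t\<in>{0..1}. \<bar>f t - (cc 0 + (\<Sum>j=1..m0. cc j * t powr lam j))\<bar> < \<epsilon> / 2"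
    using \<epsilon> unfolding apx_def by (meson half_gt_zero)
  define m where "m = Suc m0"
  define c' where "c' j = (if j \<le> m0 then cc j else 0)" for j
  define S where "S = (\<Sum>j=1..m. \<bar>c' j\<bar>)"
  have S0: "S \<ge> 0" unfolding S_def by (simp add: sum_nonneg)
  define \<eta> where "\<eta> = \<epsilon> / (2 * (S + 1))"
  have \<eta>: "\<eta> > 0" using \<epsilon> S0 by (simp add: \<eta>_def)
  have evj: "\<forall>j\<in>{1..m}. eventually (\<lambda>n. \<forall>t\<in>{0..1}.
      \<bar>fractal N xs alpha n (q n) (\<lambda>s. s powr lam j) t - t powr lam j\<bar> \<le> \<eta>) sequentially"
  proof
    fix j assume "j \<in> {1..m}"
    then have "lam j > 0" using lam_pos by simp
    then show "eventually (\<lambda>n. \<forall>t\<in>{0..1}.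
      \<bar>fractal N xs alpha n (q n) (\<lambda>s. s powr lam j) t - t powr lam j\<bar> \<le> \<eta>) sequentially"
      using fractal_conv[where l="lam j", OF P q_range q_lim c0 c1 ac _ \<eta>] by simp
  qed
  have "eventually (\<lambda>n. \<forall>j\<in>{1..m}. \<forall>t\<in>{0..1}.
      \<bar>fractal N xs alpha n (q n) (\<lambda>s. s powr lam j) t - t powr lam j\<bar> \<le> \<eta>) sequentially"
    by (rule eventually_ball_finite[OF _ evj]) simp
  moreover have "eventually (\<lambda>n. n \<ge> 1) sequentially" by (rule eventually_ge_at_top)
  ultimately have "eventually (\<lambda>n. n \<ge> 1 \<and> (\<forall>j\<in>{1..m}. \<forall>t\<in>{0..1}.
      \<bar>fractal N xs alpha n (q n) (\<lambda>s. s powr lam j) t - t powr lam j\<bar> \<le> \<eta>)) sequentially"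
    by (rule eventually_conj[rotated])
  then obtain n where n1: "n \<ge> 1" and nb: "\<And>j t. j \<in> {1..m} \<Longrightarrow> t \<in> {0..1} \<Longrightarrow>
      \<bar>fractal N xs alpha n (q n) (\<lambda>s. s powr lam j) t - t powr lam j\<bar> \<le> \<eta>"
    unfolding eventually_sequentially by blast
  have m1: "1 \<le> m" by (simp add: m_def)
  have "\<forall>t\<in>{0..1}. \<bar>f t - (c' 0 + (\<Sum>j=1..m.
              c' j * fractal N xs alpha n (q n) (\<lambda>s. s powr lam j) t))\<bar> < \<epsilon>"
  proof
    fix t :: real assume t: "t \<in> {0..1}"
    define F where "F j = fractal N xs alpha n (q n) (\<lambda>s. s powr lam j) t" for j
    have s1: "(\<Sum>j=1..m0. cc j * t powr lam j) = (\<Sum>j=1..m. c' j * t powr lam j)"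
    proof -
      have "(\<Sum>j=1..m. c' j * t powr lam j) = (\<Sum>j=1..m0. c' j * t powr lam j)"
        by (simp add: m_def c'_def)
      also have "\<dots> = (\<Sum>j=1..m0. cc j * t powr lam j)" by (rule sum.cong) (auto simp: c'_def)
      finally show ?thesis by simp
    qed
    have c'0: "c' 0 = cc 0" by (simp add: c'_def)
    have "\<bar>(\<Sum>j=1..m. c' j * F j) - (\<Sum>j=1..m. c' j * t powr lam j)\<bar> = \<bar>\<Sum>j=1..m. c' j * (F j - t powr lam j)\<bar>"
      by (simp add: sum_subtractf algebra_simps)
    also have "\<dots> \<le> (\<Sum>j=1..m. \<bar>c' j * (F j - t powr lam j)\<bar>)" by (rule sum_abs)
    also have "\<dots> \<le> (\<Sum>j=1..m. \<bar>c' j\<bar> * \<eta>)"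
    proof (rule sum_mono)
      fix j assume j: "j \<in> {1..m}"
      show "\<bar>c' j * (F j - t powr lam j)\<bar> \<le> \<bar>c' j\<bar> * \<eta>"
        unfolding abs_mult F_def by (rule mult_left_mono[OF nb[OF j t]]) simp
    qed
    also have "\<dots> = S * \<eta>" by (simp add: S_def sum_distrib_right)
    also have "\<dots> < \<epsilon> / 2"
    proof -
      have "S * \<eta> = \<epsilon> / 2 * (S / (S + 1))" using S0 by (simp add: \<eta>_def field_simps)
      also have "\<dots> < \<epsilon> / 2 * 1" using S0 \<epsilon> by (intro mult_strict_left_mono) auto
      finally show ?thesis by simp
    qed
    finally have d2: "\<bar>(\<Sum>j=1..m. c' j * F j) - (\<Sum>j=1..m. c' j * t powr lam j)\<bar> < \<epsilon> / 2" .
    have d1: "\<bar>f t - (c' 0 + (\<Sum>j=1..m. c' j * t powr lam j))\<bar> < \<epsilon> / 2"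
      using mc t unfolding s1[symmetric] c'0 by blast
    have "\<bar>f t - (c' 0 + (\<Sum>j=1..m. c' j * F j))\<bar> < \<epsilon>" using d1 d2 by linarith
    then show "\<bar>f t - (c' 0 + (\<Sum>j=1..m. c' j * fractal N xs alpha n (q n) (\<lambda>s. s powr lam j) t))\<bar> < \<epsilon>"
      by (simp add: F_def)
  qed
  then show "\<exists>n\<ge>1. \<exists>m\<ge>1. \<exists>c :: nat \<Rightarrow> real. \<forall>t\<in>{0..1}. \<bar>f t - (c 0 + (\<Sum>j=1..m.
              c j * fractal N xs alpha n (q n) (\<lambda>s. s powr lam j) t))\<bar> < \<epsilon>"
    using n1 m1 by blast
qed


end
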